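(* Let $\Gamma$ be a subalgebra of the $\Bbbk$-algebra $A$ such that (i) $\Gamma$ is noetherian, (ii) $\Gamma$ is quasicommutative, and (iii) $\Gamma$ is quasicentral in $A$. Then $\Gamma$ is a Harish-Chandra block subalgebra of $A$ with respect to the equality relation. Furthermore, for every $\mathfrak m\in\mathrm{cfs}(\Gamma)$ and $m\ge1$, $$\mathrm{Supp}(A/A\mathfrak m^m)\subseteq X(\mathfrak m):=\bigcup_{a\in A}\{\mathfrak n\in\mathrm{cfs}(\Gamma):S_{\mathfrak n}\in\mathrm{Fact}(\Gamma a\Gamma/\Gamma a\mathfrak m)\}.$$
   Context: $\mathrm{cfs}(\Gamma)$: maximal two-sided ideals $\mathfrak m$ of $\Gamma$ with $\dim\Gamma/\mathfrak m<\infty$; $S_{\mathfrak m}$ is the unique simple $\Gamma/\mathfrak m$-module; $\mathrm{Fact}(M)$ is the set of composition factors of a finite-dimensional module $M$. $\Gamma$ is quasicommutative if $\mathrm{Ext}^1_\Gamma(S_{\mathfrak m},S_{\mathfrak n})=0$ for distinct $\mathfrak m,\mathfrak n\in\mathrm{cfs}(\Gamma)$; $\Gamma$ is quasicentral in $A$ if $\Gamma a\Gamma$ is finitely generated as a left and as a right $\Gamma$-module for every $a\in A$. With respect to the equality relation, the classes are singletons $\{\mathfrak m\}$ (identified with $\mathfrak m$), and for a $\Gamma$-module $V$, $V(\mathfrak m)=\{v:\mathfrak m^kv=0$ for some $k\ge0\}$; $V$ is a block module if $V=\bigoplus_{\mathfrak m}V(\mathfrak m)$, and $\mathrm{Supp}(V)=\{\mathfrak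 m:V(\mathfrak m)\ne0\}$. $\Gamma$ is a Harish-Chandra block subalgebra of $A$ w.r.t. equality if $A/A\mathfrak m^k$ is a block module over $\Gamma$ for all $\mathfrak m\in\mathrm{cfs}(\Gamma)$, $k\ge0$. *)

theory Defs
  imports Main "HOL-Library.Function_Algebras"
begin

definition is_algebra :: "('k::field \<Rightarrow> 'a::ring_1 \<Rightarrow> 'a) \<Rightarrow> bool" where
  "is_algebra smult \<longleftrightarrow>
     (\<forall>c x y. smult c (x + y) = smult c x + smult c y) \<and>
     (\<forall>c d x. smult (c + d) x = smult c x + smult d x) \<and>
     (\<forall>c d x. smult (c * d) x = smult c (smult d x)) \<and>
     (\<forall>x. smult 1 x = x) \<and>
     (\<forall>c x y. smult c (x * y) = smult c x * y \<and> smult c (x * y) = x * smult c y)"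

definition subalgebra :: "('k::field \<Rightarrow> 'a::ring_1 \<Rightarrow> 'a) \<Rightarrow> 'a set \<Rightarrow> bool" where
  "subalgebra smult G \<longleftrightarrow> 0 \<in> G \<and> 1 \<in> G \<and>
     (\<forall>x\<in>G. \<forall>y\<in>G. x + y \<in> G \<and> x * y \<in> G) \<and> (\<forall>x\<in>G. - x \<in> G) \<and>
     (\<forall>c. \<forall>x\<in>G. smult c x \<in> G)"

definition setmul :: "'a::ring_1 set \<Rightarrow> 'a set \<Rightarrow> 'a set" where
  "setmul X Y = {\<Sum>i<n. x i * y i | (n::nat) x y. \<forall>i<n. x i \<in> X \<and> y i \<in> Y}"

fun idealpow :: "'a::ring_1 set \<Rightarrow> 'a set \<Rightarrow> nat \<Rightarrow> 'a set" where
  "idealpow G m 0 = G"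
| "idealpow G m (Suc k) = setmul m (idealpow G m k)"

definition two_sided_ideal :: "'a::ring_1 set \<Rightarrow> 'a set \<Rightarrow> bool" where
  "two_sided_ideal G I \<longleftrightarrow> I \<subseteq> G \<and> 0 \<in> I \<and> (\<forall>x\<in>I. \<forall>y\<in>I. x + y \<in> I) \<and>
     (\<forall>g\<in>G. \<forall>x\<in>I. g * x \<in> I \<and> x * g \<in> I)"

definition left_ideal :: "'a::ring_1 set \<Rightarrow> 'a set \<Rightarrow> bool" where
  "left_ideal G I \<longleftrightarrow> I \<subseteq> G \<and> 0 \<in> I \<and> (\<forall>x\<in>I. \<forall>y\<in>I. x + y \<in> I) \<and>
     (\<forall>g\<in>G. \<forall>x\<in>I. g * x \<in> I)"

definition right_ideal :: "'a::ring_1 set \<Rightarrow> 'a set \<Rightarrow> bool" where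
  "right_ideal G I \<longleftrightarrow> I \<subseteq> G \<and> 0 \<in> I \<and> (\<forall>x\<in>I. \<forall>y\<in>I. x + y \<in> I) \<and>
     (\<forall>g\<in>G. \<forall>x\<in>I. x * g \<in> I)"

definition noetherian :: "'a::ring_1 set \<Rightarrow> bool" where
  "noetherian G \<longleftrightarrow>
     (\<forall>I :: nat \<Rightarrow> 'a set. (\<forall>i. left_ideal G (I i) \<and> I i \<subseteq> I (Suc i))
         \<longrightarrow> (\<exists>N. \<forall>i\<ge>N. I i = I N)) \<and>
     (\<forall>I :: nat \<Rightarrow> 'a set. (\<forall>i. right_ideal G (I i) \<and> I i \<subseteq> I (Suc i))
         \<longrightarrow> (\<exists>N. \<forall>i\<ge>N. I i = I N))"

definition maximal_ideal :: "'a::ring_1 set \<Rightarrow> 'a set \<Rightarrow> bool" where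
  "maximal_ideal G m \<longleftrightarrow> two_sided_ideal G m \<and> m \<noteq> G \<and>
     (\<forall>J. two_sided_ideal G J \<and> m \<subseteq> J \<longrightarrow> J = m \<or> J = G)"

definition fin_codim :: "('k::field \<Rightarrow> 'a::ring_1 \<Rightarrow> 'a) \<Rightarrow> 'a set \<Rightarrow> 'a set \<Rightarrow> bool" where
  "fin_codim smult G m \<longleftrightarrow> (\<exists>F. finite F \<and> F \<subseteq> G \<and>
     (\<forall>g\<in>G. \<exists>c. g - (\<Sum>f\<in>F. smult (c f) f) \<in> m))"

definition cfs :: "('k::field \<Rightarrow> 'a::ring_1 \<Rightarrow> 'a) \<Rightarrow> 'a set \<Rightarrow> 'a set set" where
  "cfs smult G = {m. maximal_ideal G m \<and> fin_codim smult G m}"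

definition gmodule :: "'a::ring_1 set \<Rightarrow> ('a \<Rightarrow> 'v::ab_group_add \<Rightarrow> 'v) \<Rightarrow> 'v set \<Rightarrow> bool" where
  "gmodule G act E \<longleftrightarrow> 0 \<in> E \<and> (\<forall>v\<in>E. \<forall>w\<in>E. v + w \<in> E) \<and> (\<forall>v\<in>E. - v \<in> E) \<and>
     (\<forall>g\<in>G. \<forall>v\<in>E. act g v \<in> E) \<and>
     (\<forall>g\<in>G. \<forall>h\<in>G. \<forall>v\<in>E. act (g + h) v = act g v + act h v \<and> act (g * h) v = act g (act h v)) \<and>
     (\<forall>g\<in>G. \<forall>v\<in>E. \<forall>w\<in>E. act g (v + w) = act g v + act g w) \<and>
     (\<forall>v\<in>E. act 1 v = v)"

definition gsubmodule :: "'a::ring_1 set \<Rightarrow> ('a \<Rightarrow> 'v::ab_group_add \<Rightarrow> 'v) \<Rightarrow> 'v set \<Rightarrow> 'v set \<Rightarrow> bool" where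
  "gsubmodule G act E N \<longleftrightarrow> N \<subseteq> E \<and> 0 \<in> N \<and> (\<forall>v\<in>N. \<forall>w\<in>N. v + w \<in> N) \<and> (\<forall>v\<in>N. - v \<in> N) \<and>
     (\<forall>g\<in>G. \<forall>v\<in>N. act g v \<in> N)"

text \<open>Ext^1_G(S_m, S_n) = 0: every extension 0 -> S_n -> E -> S_m -> 0 splits.
  A submodule N is isomorphic to S_n iff it is simple and annihilated by n (S_n is the unique
  simple G/n-module); similarly for E/N and S_m.  All such E are finite dimensional over k,
  hence realisable as modules whose carrier lies in the k-vector space nat => k.\<close>
definition ext1_vanishes :: "('k::field \<Rightarrow> 'a::ring_1 \<Rightarrow> 'a) \<Rightarrow> 'a set \<Rightarrow> 'a set \<Rightarrow> 'a set \<Rightarrow> bool" where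
  "ext1_vanishes smult G m n \<longleftrightarrow>
     (\<forall>(act :: 'a \<Rightarrow> (nat \<Rightarrow> 'k) \<Rightarrow> (nat \<Rightarrow> 'k)) E N.
        gmodule G act E \<and> gsubmodule G act E N \<and>
        N \<noteq> {0} \<and> (\<forall>L. gsubmodule G act E L \<and> L \<subseteq> N \<longrightarrow> L = {0} \<or> L = N) \<and>
        (\<forall>g\<in>n. \<forall>v\<in>N. act g v = 0) \<and>
        N \<noteq> E \<and> (\<forall>L. gsubmodule G act E L \<and> N \<subseteq> L \<longrightarrow> L = N \<or> L = E) \<and>
        (\<forall>g\<in>m. \<forall>v\<in>E. act g v \<in> N)
      \<longrightarrow> (\<exists>C. gsubmodule G act E C \<and> N \<inter> C = {0} \<and> (\<forall>v\<in>E. \<exists>x\<in>N. \<exists>y\<in>C. v = x + y)))"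

definition quasicommutative :: "('k::field \<Rightarrow> 'a::ring_1 \<Rightarrow> 'a) \<Rightarrow> 'a set \<Rightarrow> bool" where
  "quasicommutative smult G \<longleftrightarrow>
     (\<forall>m\<in>cfs smult G. \<forall>n\<in>cfs smult G. m \<noteq> n \<longrightarrow> ext1_vanishes smult G m n)"

definition fg_left :: "'a::ring_1 set \<Rightarrow> 'a set \<Rightarrow> bool" where
  "fg_left G M \<longleftrightarrow> (\<exists>F. finite F \<and> F \<subseteq> M \<and>
     M = {\<Sum>f\<in>F. c f * f | c. \<forall>f\<in>F. c f \<in> G})"

definition fg_right :: "'a::ring_1 set \<Rightarrow> 'a set \<Rightarrow> bool" where
  "fg_right G M \<longleftrightarrow> (\<exists>F. finite F \<and> F \<subseteq> M \<and>
     M = {\<Sum>f\<in>F. f * c f | c. \<forall>f\<in>F. c f \<in> G})"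

definition dbl :: "'a::ring_1 set \<Rightarrow> 'a \<Rightarrow> 'a set \<Rightarrow> 'a set" where
  "dbl G a H = setmul (setmul G {a}) H"

definition quasicentral :: "'a::ring_1 set \<Rightarrow> bool" where
  "quasicentral G \<longleftrightarrow> (\<forall>a. fg_left G (dbl G a G) \<and> fg_right G (dbl G a G))"

text \<open>For a left G-submodule L of A, V = A/L.  gpart G L n is the preimage in A of V(n).\<close>
definition gpart :: "'a::ring_1 set \<Rightarrow> 'a set \<Rightarrow> 'a set \<Rightarrow> 'a set" where
  "gpart G L n = {x. \<exists>j. \<forall>g\<in>idealpow G n j. g * x \<in> L}"

definition block_quot :: "('k::field \<Rightarrow> 'a::ring_1 \<Rightarrow> 'a) \<Rightarrow> 'a set \<Rightarrow> 'a set \<Rightarrow> bool" where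
  "block_quot smult G L \<longleftrightarrow>
     (\<forall>x. \<exists>F y. finite F \<and> F \<subseteq> cfs smult G \<and> (\<forall>n\<in>F. y n \<in> gpart G L n) \<and>
          x - (\<Sum>n\<in>F. y n) \<in> L) \<and>
     (\<forall>F y. finite F \<and> F \<subseteq> cfs smult G \<and> (\<forall>n\<in>F. y n \<in> gpart G L n) \<and>
          (\<Sum>n\<in>F. y n) \<in> L \<longrightarrow> (\<forall>n\<in>F. y n \<in> L))"

definition supp_quot :: "('k::field \<Rightarrow> 'a::ring_1 \<Rightarrow> 'a) \<Rightarrow> 'a set \<Rightarrow> 'a set \<Rightarrow> 'a set set" where
  "supp_quot smult G L = {n \<in> cfs smult G. \<not> gpart G L n \<subseteq> L}"

definition Aideal :: "'a::ring_1 set \<Rightarrow> 'a set \<Rightarrow> nat \<Rightarrow> 'a set" where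
  "Aideal G m k = setmul UNIV (idealpow G m k)"

definition HC_block_subalgebra :: "('k::field \<Rightarrow> 'a::ring_1 \<Rightarrow> 'a) \<Rightarrow> 'a set \<Rightarrow> bool" where
  "HC_block_subalgebra smult G \<longleftrightarrow>
     (\<forall>m\<in>cfs smult G. \<forall>k. block_quot smult G (Aideal G m k))"

text \<open>Left G-submodules of A and composition factors: S_n is in Fact(M/M0) iff it is
  isomorphic to a simple subquotient N/N' with M0 <= N' < N <= M, i.e. N/N' simple and
  annihilated by n.\<close>
definition left_submod :: "'a::ring_1 set \<Rightarrow> 'a set \<Rightarrow> bool" where
  "left_submod G N \<longleftrightarrow> 0 \<in> N \<and> (\<forall>x\<in>N. \<forall>y\<in>N. x + y \<in> N) \<and> (\<forall>g\<in>G. \<forall>x\<in>N. g * x \<in> N)"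

definition is_factor :: "'a::ring_1 set \<Rightarrow> 'a set \<Rightarrow> 'a set \<Rightarrow> 'a set \<Rightarrow> bool" where
  "is_factor G n M M0 \<longleftrightarrow> (\<exists>N N'. left_submod G N \<and> left_submod G N' \<and>
     M0 \<subseteq> N' \<and> N' \<subseteq> N \<and> N \<subseteq> M \<and> N' \<noteq> N \<and>
     (\<forall>L. left_submod G L \<and> N' \<subseteq> L \<and> L \<subseteq> N \<longrightarrow> L = N' \<or> L = N) \<and>
     (\<forall>g\<in>n. \<forall>x\<in>N. g * x \<in> N'))"

definition Xset :: "('k::field \<Rightarrow> 'a::ring_1 \<Rightarrow> 'a) \<Rightarrow> 'a set \<Rightarrow> 'a set \<Rightarrow> 'a set set" where
  "Xset smult G m = (\<Union>a. {n \<in> cfs smult G. is_factor G n (dbl G a G) (dbl G a m)})"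

end

theory Submission
  imports Defs
begin


lemma sum_lessThan_add_split:
  fixes f :: "nat \<Rightarrow> 'b::comm_monoid_add"
  shows "(\<Sum>i<n1+n2. f i) = (\<Sum>i<n1. f i) + (\<Sum>i<n2. f (n1 + i))"
  by (induction n2) (simp_all add: add.assoc)

lemma setmul_0: "0 \<in> setmul X Y"
  unfolding setmul_def by (rule CollectI, rule exI[of _ 0]) auto

lemma setmul_prod: "x \<in> X \<Longrightarrow> y \<in> Y \<Longrightarrow> x * y \<in> setmul X Y"
  unfolding setmul_def
  by (rule CollectI, rule exI[of _ 1], rule exI[of _ "\<lambda>_. x"], rule exI[of _ "\<lambda>_. y"]) auto

lemma setmul_E: "s \<in> setmul X Y \<Longrightarrow> \<exists>(n::nat) x y. s = (\<Sum>i<n. x i * y i) \<and> (\<forall>i<n. x i \<in> X \<and> y i \<in> Y)"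
  unfolding setmul_def by (simp only: mem_Collect_eq)

lemma setmul_add:
  assumes "a \<in> setmul X Y" "b \<in> setmul X Y" shows "a + b \<in> setmul X Y"
proof -
  obtain n1 :: nat and x1 y1 where A: "a = (\<Sum>i<n1. x1 i * y1 i)" "\<forall>i<n1. x1 i \<in> X \<and> y1 i \<in> Y"
    using setmul_E[OF assms(1)] by blast
  obtain n2 :: nat and x2 y2 where B: "b = (\<Sum>i<n2. x2 i * y2 i)" "\<forall>i<n2. x2 i \<in> X \<and> y2 i \<in> Y"
    using setmul_E[OF assms(2)] by blast
  define x where "x i = (if i < n1 then x1 i else x2 (i - n1))" for i
  define y where "y i = (if i < n1 then y1 i else y2 (i - n1))" for i
  have "(\<Sum>i<n1+n2. x i * y i) = (\<Sum>i<n1. x i * y i) + (\<Sum>i<n2. x (n1+i) * y (n1+i))"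
    by (rule sum_lessThan_add_split)
  also have "\<dots> = a + b" unfolding A B x_def y_def by simp
  finally have "a + b = (\<Sum>i<n1+n2. x i * y i)" by simp
  moreover have "\<forall>i<n1+n2. x i \<in> X \<and> y i \<in> Y" using A(2) B(2) unfolding x_def y_def by auto
  ultimately show ?thesis unfolding setmul_def by blast
qed

lemma setmul_least:
  assumes "0 \<in> W" "\<And>a b. a \<in> W \<Longrightarrow> b \<in> W \<Longrightarrow> a + b \<in> W"
    "\<And>x y. x \<in> X \<Longrightarrow> y \<in> Y \<Longrightarrow> x * y \<in> W"
  shows "setmul X Y \<subseteq> W"
proof
  fix s assume "s \<in> setmul X Y"
  then obtain n :: nat and x y where S: "s = (\<Sum>i<n. x i * y i)" "\<forall>i<n. x i \<in> X \<and> y i \<in> Y"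
    using setmul_E by blast
  have "\<forall>m\<le>n. (\<Sum>i<m. x i * y i) \<in> W"
  proof (intro allI impI)
    fix m assume "m \<le> n" thus "(\<Sum>i<m. x i * y i) \<in> W"
      by (induction m) (auto simp: assms S(2))
  qed
  thus "s \<in> W" using S by auto
qed

lemma setmul_mono: "X \<subseteq> X' \<Longrightarrow> Y \<subseteq> Y' \<Longrightarrow> setmul X Y \<subseteq> setmul X' Y'"
  by (rule setmul_least) (auto intro: setmul_0 setmul_add setmul_prod)

lemma setmul_sum_closed:
  assumes "\<And>i. i \<in> I \<Longrightarrow> f i \<in> setmul X Y" shows "sum f I \<in> setmul X Y"
proof (cases "finite I")
  case True thus ?thesis using assms by (induction I rule: finite_induct) (auto intro: setmul_0 setmul_add)
qed (simp add: setmul_0)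

locale hc =
  fixes smult :: "'k::field \<Rightarrow> 'a::ring_1 \<Rightarrow> 'a" and G :: "'a set"
  assumes alg: "is_algebra smult" and sub: "subalgebra smult G"
begin

lemma sm_add: "smult c (x + y) = smult c x + smult c y" using alg unfolding is_algebra_def by blast
lemma sm_addc: "smult (c + d) x = smult c x + smult d x" using alg unfolding is_algebra_def by blast
lemma sm_mult: "smult (c * d) x = smult c (smult d x)" using alg unfolding is_algebra_def by blast
lemma sm_one: "smult 1 x = x" using alg unfolding is_algebra_def by blast
lemma sm_ml: "smult c (x * y) = smult c x * y" using alg unfolding is_algebra_def by blast
lemma sm_mr: "smult c (x * y) = x * smult c y" using alg unfolding is_algebra_def by blast
lemma sm_zero: "smult c 0 = 0"
  using sm_add[of c 0 0] by simp
lemma sm_zeroc: "smult 0 x = 0"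
  using sm_addc[of 0 0 x] by simp
lemma sm_neg: "smult c (- x) = - smult c x"
  using sm_add[of c x "-x"] by (simp add: sm_zero eq_neg_iff_add_eq_0) (metis add.commute)
lemma sm_diff: "smult c (x - y) = smult c x - smult c y"
  using sm_add[of c x "-y"] sm_neg by simp
lemma sm_negc: "smult (- c) x = - smult c x"
  using sm_addc[of c "-c" x] by (simp add: sm_zeroc eq_neg_iff_add_eq_0) (metis add.commute)
lemma sm_diffc: "smult (c - d) x = smult c x - smult d x"
  using sm_addc[of c "-d" x] sm_negc by simp
lemma sm_is: "smult c x = smult c 1 * x" using sm_ml[of c 1 x] by simp
lemma sm_is2: "smult c x = x * smult c 1" using sm_mr[of c x 1] by simp
lemma sm_central: "smult c 1 * x = x * smult c 1" using sm_is sm_is2 by metis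
lemma sm_mul_comm: "x * smult c y = smult c (x * y)" using sm_mr by metis
lemma sm_sum: "smult c (sum f I) = (\<Sum>i\<in>I. smult c (f i))"
proof (cases "finite I")
  case True thus ?thesis by (induction I rule: finite_induct) (auto simp: sm_zero sm_add)
qed (simp add: sm_zero)
lemma sm_inv: "c \<noteq> 0 \<Longrightarrow> smult (inverse c) (smult c x) = x"
  by (simp add: sm_mult[symmetric] sm_one)

lemma G0: "0 \<in> G" using sub unfolding subalgebra_def by blast
lemma G1: "1 \<in> G" using sub unfolding subalgebra_def by blast
lemma Gadd: "x \<in> G \<Longrightarrow> y \<in> G \<Longrightarrow> x + y \<in> G" using sub unfolding subalgebra_def by blast
lemma Gmul: "x \<in> G \<Longrightarrow> y \<in> G \<Longrightarrow> x * y \<in> G" using sub unfolding subalgebra_def by blast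
lemma Gneg: "x \<in> G \<Longrightarrow> - x \<in> G" using sub unfolding subalgebra_def by blast
lemma Gdiff: "x \<in> G \<Longrightarrow> y \<in> G \<Longrightarrow> x - y \<in> G" using Gadd Gneg by (metis diff_conv_add_uminus)
lemma Gsm: "x \<in> G \<Longrightarrow> smult c x \<in> G" using sub unfolding subalgebra_def by blast
lemma Gsc: "smult c 1 \<in> G" using Gsm G1 by blast
lemma Gsum: "(\<And>i. i \<in> I \<Longrightarrow> f i \<in> G) \<Longrightarrow> sum f I \<in> G"
proof (cases "finite I")
  case True thus "(\<And>i. i \<in> I \<Longrightarrow> f i \<in> G) \<Longrightarrow> sum f I \<in> G"
    by (induction I rule: finite_induct) (auto intro: G0 Gadd)
qed (simp add: G0)

definition ksub :: "'a set \<Rightarrow> bool" where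
  "ksub X \<longleftrightarrow> 0 \<in> X \<and> (\<forall>x\<in>X. \<forall>y\<in>X. x + y \<in> X) \<and> (\<forall>c. \<forall>x\<in>X. smult c x \<in> X)"

lemma ksub_0: "ksub X \<Longrightarrow> 0 \<in> X" unfolding ksub_def by blast
lemma ksub_add: "ksub X \<Longrightarrow> x \<in> X \<Longrightarrow> y \<in> X \<Longrightarrow> x + y \<in> X" unfolding ksub_def by blast
lemma ksub_sm: "ksub X \<Longrightarrow> x \<in> X \<Longrightarrow> smult c x \<in> X" unfolding ksub_def by blast
lemma ksub_neg: "ksub X \<Longrightarrow> x \<in> X \<Longrightarrow> - x \<in> X"
  using ksub_sm[of X x "-1"] by (simp add: sm_negc sm_one)
lemma ksub_diff: "ksub X \<Longrightarrow> x \<in> X \<Longrightarrow> y \<in> X \<Longrightarrow> x - y \<in> X"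
  using ksub_add ksub_neg by (metis diff_conv_add_uminus)
lemma ksub_sum: "ksub X \<Longrightarrow> (\<And>i. i \<in> I \<Longrightarrow> f i \<in> X) \<Longrightarrow> sum f I \<in> X"
proof (cases "finite I")
  case True thus "ksub X \<Longrightarrow> (\<And>i. i \<in> I \<Longrightarrow> f i \<in> X) \<Longrightarrow> sum f I \<in> X"
    by (induction I rule: finite_induct) (auto intro: ksub_0 ksub_add)
qed (simp add: ksub_0)
lemma ksub_Int: "ksub X \<Longrightarrow> ksub Y \<Longrightarrow> ksub (X \<inter> Y)" unfolding ksub_def by blast

abbreviation lsm where "lsm X \<equiv> left_submod G X"

lemma lsm_0: "lsm X \<Longrightarrow> 0 \<in> X" unfolding left_submod_def by blast
lemma lsm_add: "lsm X \<Longrightarrow> x \<in> X \<Longrightarrow> y \<in> X \<Longrightarrow> x + y \<in> X" unfolding left_submod_def by blast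
lemma lsm_mul: "lsm X \<Longrightarrow> g \<in> G \<Longrightarrow> x \<in> X \<Longrightarrow> g * x \<in> X" unfolding left_submod_def by blast
lemma lsm_neg: "lsm X \<Longrightarrow> x \<in> X \<Longrightarrow> - x \<in> X"
  using lsm_mul[of X "-1" x] Gneg[OF G1] by simp
lemma lsm_diff: "lsm X \<Longrightarrow> x \<in> X \<Longrightarrow> y \<in> X \<Longrightarrow> x - y \<in> X"
  using lsm_add lsm_neg by (metis diff_conv_add_uminus)
lemma lsm_sm: "lsm X \<Longrightarrow> x \<in> X \<Longrightarrow> smult c x \<in> X"
  using lsm_mul[OF _ Gsc] sm_is by metis
lemma lsm_ksub: "lsm X \<Longrightarrow> ksub X" unfolding ksub_def using lsm_0 lsm_add lsm_sm by blast
lemma lsm_sum: "lsm X \<Longrightarrow> (\<And>i. i \<in> I \<Longrightarrow> f i \<in> X) \<Longrightarrow> sum f I \<in> X"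
  using ksub_sum lsm_ksub by blast
lemma lsm_Int: "lsm X \<Longrightarrow> lsm Y \<Longrightarrow> lsm (X \<inter> Y)" unfolding left_submod_def by blast
lemma lsm_G: "lsm G" unfolding left_submod_def using G0 Gadd Gmul by blast
lemma lsm_UNIV: "lsm UNIV" unfolding left_submod_def by blast

definition ssum :: "'a set \<Rightarrow> 'a set \<Rightarrow> 'a set" where
  "ssum X Y = {x + y | x y. x \<in> X \<and> y \<in> Y}"

lemma ssum_lsm: assumes "lsm X" "lsm Y" shows "lsm (ssum X Y)"
  unfolding left_submod_def
proof (intro conjI ballI)
  show "0 \<in> ssum X Y" unfolding ssum_def using lsm_0[OF assms(1)] lsm_0[OF assms(2)]
    by (metis (mono_tags, lifting) add_0 mem_Collect_eq)
next
  fix a b assume "a \<in> ssum X Y" "b \<in> ssum X Y"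
  then obtain x1 y1 x2 y2 where "a = x1 + y1" "b = x2 + y2" "x1 \<in> X" "y1 \<in> Y" "x2 \<in> X" "y2 \<in> Y"
    unfolding ssum_def by blast
  moreover have "x1 + y1 + (x2 + y2) = (x1 + x2) + (y1 + y2)" by (simp add: algebra_simps)
  ultimately show "a + b \<in> ssum X Y" unfolding ssum_def using lsm_add assms by fastforce
next
  fix g a assume "g \<in> G" "a \<in> ssum X Y"
  then obtain x1 y1 where "a = x1 + y1" "x1 \<in> X" "y1 \<in> Y" unfolding ssum_def by blast
  moreover have "g * (x1 + y1) = g * x1 + g * y1" by (simp add: distrib_left)
  ultimately show "g * a \<in> ssum X Y" unfolding ssum_def using lsm_mul assms \<open>g \<in> G\<close> by fastforce
qed

lemma ssum_I: "x \<in> X \<Longrightarrow> y \<in> Y \<Longrightarrow> x + y \<in> ssum X Y" unfolding ssum_def by blast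
lemma ssum_left: "0 \<in> Y \<Longrightarrow> X \<subseteq> ssum X Y" unfolding ssum_def by force
lemma ssum_right: "0 \<in> X \<Longrightarrow> Y \<subseteq> ssum X Y" unfolding ssum_def by force
lemma ssum_E: "z \<in> ssum X Y \<Longrightarrow> (\<And>x y. x \<in> X \<Longrightarrow> y \<in> Y \<Longrightarrow> z = x + y \<Longrightarrow> P) \<Longrightarrow> P"
  unfolding ssum_def by blast
lemma ssum_sub: "lsm W \<Longrightarrow> X \<subseteq> W \<Longrightarrow> Y \<subseteq> W \<Longrightarrow> ssum X Y \<subseteq> W"
  unfolding ssum_def using lsm_add by blast

definition kspan :: "'a set \<Rightarrow> 'a set" where
  "kspan B = {y. \<exists>c. y = (\<Sum>b\<in>B. smult (c b) b)}"

definition ms :: "'a set \<Rightarrow> 'a set \<Rightarrow> 'a set" where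
  "ms N' B = {x. \<exists>y\<in>kspan B. x - y \<in> N'}"

lemma kspan_ksub: "ksub (kspan B)"
  unfolding ksub_def kspan_def
proof (intro conjI ballI allI)
  show "0 \<in> {y. \<exists>c. y = (\<Sum>b\<in>B. smult (c b) b)}"
    by (rule CollectI, rule exI[of _ "\<lambda>_. 0"]) (simp add: sm_zeroc)
next
  fix x y assume "x \<in> {y. \<exists>c. y = (\<Sum>b\<in>B. smult (c b) b)}" "y \<in> {y. \<exists>c. y = (\<Sum>b\<in>B. smult (c b) b)}"
  then obtain c d where "x = (\<Sum>b\<in>B. smult (c b) b)" "y = (\<Sum>b\<in>B. smult (d b) b)" by blast
  hence "x + y = (\<Sum>b\<in>B. smult (c b + d b) b)" by (simp add: sm_addc sum.distrib)
  thus "x + y \<in> {y. \<exists>c. y = (\<Sum>b\<in>B. smult (c b) b)}" by (intro CollectI exI)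
next
  fix e x assume "x \<in> {y. \<exists>c. y = (\<Sum>b\<in>B. smult (c b) b)}"
  then obtain c where "x = (\<Sum>b\<in>B. smult (c b) b)" by blast
  hence "smult e x = (\<Sum>b\<in>B. smult (e * c b) b)" by (simp add: sm_sum sm_mult)
  thus "smult e x \<in> {y. \<exists>c. y = (\<Sum>b\<in>B. smult (c b) b)}" by (intro CollectI exI)
qed

lemma kspan_base: assumes "finite B" "b \<in> B" shows "b \<in> kspan B"
proof -
  have "(\<Sum>x\<in>B. smult (if x = b then 1 else 0) x) = (\<Sum>x\<in>B. if x = b then b else 0)"
    by (rule sum.cong) (auto simp: sm_one sm_zeroc)
  also have "\<dots> = b" using assms by simp
  finally have "b = (\<Sum>x\<in>B. smult (if x = b then 1 else 0) x)" by simp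
  thus ?thesis unfolding kspan_def by (intro CollectI exI)
qed

lemma kspan_least: assumes "ksub X" "B \<subseteq> X" shows "kspan B \<subseteq> X"
proof
  fix y assume "y \<in> kspan B"
  then obtain c where c: "y = (\<Sum>b\<in>B. smult (c b) b)" unfolding kspan_def by blast
  have "\<And>b. b \<in> B \<Longrightarrow> smult (c b) b \<in> X" using ksub_sm[OF assms(1)] assms(2) by blast
  thus "y \<in> X" unfolding c by (rule ksub_sum[OF assms(1)])
qed

lemma ms_ksub: assumes "ksub N'" shows "ksub (ms N' B)"
  unfolding ksub_def
proof (intro conjI ballI allI)
  have "0 - 0 \<in> N'" using ksub_0[OF assms] by simp
  thus "0 \<in> ms N' B" unfolding ms_def using ksub_0[OF kspan_ksub] by blast
next
  fix x y assume "x \<in> ms N' B" "y \<in> ms N' B"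
  then obtain a b where ab: "a \<in> kspan B" "x - a \<in> N'" "b \<in> kspan B" "y - b \<in> N'"
    unfolding ms_def by blast
  have eq: "x + y - (a + b) = (x - a) + (y - b)" by simp
  have "x + y - (a + b) \<in> N'" unfolding eq using ksub_add[OF assms ab(2) ab(4)] .
  moreover have "a + b \<in> kspan B" using ksub_add[OF kspan_ksub] ab by blast
  ultimately show "x + y \<in> ms N' B" unfolding ms_def by blast
next
  fix c x assume "x \<in> ms N' B"
  then obtain a where a: "a \<in> kspan B" "x - a \<in> N'" unfolding ms_def by blast
  have eq: "smult c x - smult c a = smult c (x - a)" by (simp add: sm_diff)
  have "smult c x - smult c a \<in> N'" unfolding eq using ksub_sm[OF assms a(2)] .
  moreover have "smult c a \<in> kspan B" using ksub_sm[OF kspan_ksub] a by blast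
  ultimately show "smult c x \<in> ms N' B" unfolding ms_def by blast
qed

lemma ms_base: assumes "finite B" "ksub N'" shows "B \<subseteq> ms N' B"
proof
  fix b assume "b \<in> B"
  hence "b \<in> kspan B" using kspan_base assms by blast
  moreover have "b - b \<in> N'" using ksub_0[OF assms(2)] by simp
  ultimately show "b \<in> ms N' B" unfolding ms_def by blast
qed
lemma ms_N': assumes "ksub N'" shows "N' \<subseteq> ms N' B"
proof
  fix x assume "x \<in> N'"
  hence "x - 0 \<in> N'" by simp
  moreover have "0 \<in> kspan B" using ksub_0[OF kspan_ksub] .
  ultimately show "x \<in> ms N' B" unfolding ms_def by blast
qed
lemma ms_least: assumes "ksub X" "B \<subseteq> X" "N' \<subseteq> X" shows "ms N' B \<subseteq> X"
proof
  fix x assume "x \<in> ms N' B"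
  then obtain y where "y \<in> kspan B" "x - y \<in> N'" unfolding ms_def by blast
  moreover have "y \<in> X" using kspan_least[OF assms(1,2)] \<open>y \<in> kspan B\<close> by blast
  ultimately show "x \<in> X" using ksub_add[OF assms(1), of "x - y" y] assms(3) by auto
qed
lemma ms_mono: assumes "ksub N2" "finite B2" "N1 \<subseteq> N2" "B1 \<subseteq> B2" shows "ms N1 B1 \<subseteq> ms N2 B2"
proof (rule ms_least)
  show "ksub (ms N2 B2)" using ms_ksub[OF assms(1)] .
  show "B1 \<subseteq> ms N2 B2" using ms_base[OF assms(2,1)] assms(4) by blast
  show "N1 \<subseteq> ms N2 B2" using ms_N'[OF assms(1)] assms(3) by blast
qed

lemma ms_sumform: "finite B \<Longrightarrow> x \<in> ms N' B \<longleftrightarrow> (\<exists>c. x - (\<Sum>b\<in>B. smult (c b) b) \<in> N')"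
  unfolding ms_def kspan_def by auto

lemma ms_insert:
  assumes "finite B" "b \<notin> B" "ksub N'" "x \<in> ms N' (insert b B)"
  shows "\<exists>d. x - smult d b \<in> ms N' B"
proof -
  obtain c where "x - (\<Sum>a\<in>insert b B. smult (c a) a) \<in> N'"
    using assms(1,4) ms_sumform[of "insert b B"] by auto
  hence "(x - smult (c b) b) - (\<Sum>a\<in>B. smult (c a) a) \<in> N'"
    using assms(1,2) by (simp add: algebra_simps)
  thus ?thesis using ms_sumform[OF assms(1)] by blast
qed

definition spans where
  "spans N N' B \<longleftrightarrow> finite B \<and> B \<subseteq> N \<and> N \<subseteq> ms N' B"

definition fdim where "fdim N N' \<longleftrightarrow> (\<exists>B. spans N N' B)"

definition qd where "qd N N' = (LEAST n. \<exists>B. spans N N' B \<and> card B = n)"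

lemma qd_spans: "fdim N N' \<Longrightarrow> \<exists>B. spans N N' B \<and> card B = qd N N'"
  unfolding fdim_def qd_def by (rule LeastI_ex) blast

lemma qd_le: "spans N N' B \<Longrightarrow> qd N N' \<le> card B"
  unfolding qd_def by (rule Least_le) blast

lemma spans_mono: "ksub K \<Longrightarrow> spans N N' B \<Longrightarrow> N' \<subseteq> K \<Longrightarrow> spans N K B"
  unfolding spans_def using ms_mono[of K B N' B] by blast

lemma fdim_mono: "ksub K \<Longrightarrow> fdim N N' \<Longrightarrow> N' \<subseteq> K \<Longrightarrow> fdim N K"
  unfolding fdim_def using spans_mono by blast

lemma qd_mono: "ksub K \<Longrightarrow> fdim N N' \<Longrightarrow> N' \<subseteq> K \<Longrightarrow> qd N K \<le> qd N N'"
  using qd_spans qd_le spans_mono by metis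

lemma drop_lemma:
  assumes K: "ksub K" and N'K: "N' \<subseteq> K" and fin: "finite B" and xK: "x \<in> K"
    and x: "x - (\<Sum>b\<in>B. smult (c b) b) \<in> N'" and b0: "b0 \<in> B" "c b0 \<noteq> 0"
  shows "ms N' B \<subseteq> ms K (B - {b0})"
proof (rule ms_least)
  let ?W = "ms K (B - {b0})"
  have W: "ksub ?W" using ms_ksub K by blast
  show "ksub ?W" by fact
  show "N' \<subseteq> ?W" using ms_N'[OF K] N'K by blast
  have s: "(\<Sum>b\<in>B. smult (c b) b) = smult (c b0) b0 + (\<Sum>b\<in>B - {b0}. smult (c b) b)"
    using fin b0 by (simp add: sum.remove)
  have "\<And>b. b \<in> B - {b0} \<Longrightarrow> smult (c b) b \<in> ?W"
    using ms_base[OF _ K, of "B - {b0}"] fin ksub_sm[OF W] by blast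
  hence "(\<Sum>b\<in>B - {b0}. smult (c b) b) \<in> ?W" by (rule ksub_sum[OF W])
  moreover have "(\<Sum>b\<in>B. smult (c b) b) \<in> ?W"
  proof -
    have "x \<in> ?W" "x - (\<Sum>b\<in>B. smult (c b) b) \<in> ?W"
      using xK x N'K ms_N'[OF K] by auto
    thus ?thesis using ksub_diff[OF W] by fastforce
  qed
  ultimately have "smult (c b0) b0 \<in> ?W" using s ksub_diff[OF W] by fastforce
  hence "b0 \<in> ?W" using ksub_sm[OF W, of _ "inverse (c b0)"] sm_inv[OF b0(2)] by metis
  moreover have "B - {b0} \<subseteq> ?W" using ms_base[OF _ K] fin by blast
  ultimately show "B \<subseteq> ?W" by blast
qed

lemma qd_drop:
  assumes K: "ksub K" and N': "ksub N'" and fd: "fdim N N'" and sub: "N' \<subseteq> K" "K \<subseteq> N" and nK: "\<not> K \<subseteq> N'"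
  shows "qd N K < qd N N'"
proof -
  obtain B where B: "spans N N' B" "card B = qd N N'" using qd_spans[OF fd] by blast
  obtain x where x: "x \<in> K" "x \<notin> N'" using nK by blast
  have fin: "finite B" using B unfolding spans_def by blast
  have "x \<in> ms N' B" using B sub x unfolding spans_def by blast
  then obtain c where c: "x - (\<Sum>b\<in>B. smult (c b) b) \<in> N'" using ms_sumform[OF fin] by blast
  have "\<exists>b0\<in>B. c b0 \<noteq> 0"
  proof (rule ccontr)
    assume "\<not> ?thesis" hence "(\<Sum>b\<in>B. smult (c b) b) = 0" by (simp add: sm_zeroc)
    thus False using c x by simp
  qed
  then obtain b0 where b0: "b0 \<in> B" "c b0 \<noteq> 0" by blast
  have "ms N' B \<subseteq> ms K (B - {b0})" using drop_lemma[OF K sub(1) fin x(1) c b0] .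
  hence "spans N K (B - {b0})" using B unfolding spans_def by auto
  hence "qd N K \<le> card (B - {b0})" by (rule qd_le)
  also have "\<dots> < card B" using card_Diff1_less[OF fin b0(1)] .
  finally show ?thesis using B by simp
qed

lemma subsp_aux:
  assumes fin: "finite B" and N': "ksub N'"
  shows "\<forall>K. ksub K \<and> N' \<subseteq> K \<and> K \<subseteq> ms N' B \<longrightarrow>
     (\<exists>B'. finite B' \<and> B' \<subseteq> K \<and> card B' \<le> card B \<and> K \<subseteq> ms N' B')"
  using fin
proof (induction B rule: finite_induct)
  case empty
  show ?case
  proof (intro allI impI)
    fix K assume "ksub K \<and> N' \<subseteq> K \<and> K \<subseteq> ms N' {}"
    thus "\<exists>B'. finite B' \<and> B' \<subseteq> K \<and> card B' \<le> card {} \<and> K \<subseteq> ms N' B'"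
      by (intro exI[of _ "{}"]) simp
  qed
next
  case (insert b B)
  show ?case
  proof (intro allI impI)
    fix K assume K: "ksub K \<and> N' \<subseteq> K \<and> K \<subseteq> ms N' (insert b B)"
    let ?K0 = "K \<inter> ms N' B"
    have "ksub ?K0" using K ms_ksub[OF N'] ksub_Int by blast
    moreover have "N' \<subseteq> ?K0" using K ms_N'[OF N'] by blast
    moreover have "?K0 \<subseteq> ms N' B" by blast
    ultimately have pre: "ksub ?K0 \<and> N' \<subseteq> ?K0 \<and> ?K0 \<subseteq> ms N' B" by blast
    have "\<exists>B'. finite B' \<and> B' \<subseteq> ?K0 \<and> card B' \<le> card B \<and> ?K0 \<subseteq> ms N' B'"
      by (rule mp[OF spec[OF insert.IH, of ?K0] pre])
    then obtain B0 where B0: "finite B0" "B0 \<subseteq> ?K0" "card B0 \<le> card B" "?K0 \<subseteq> ms N' B0"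
      by blast
    show "\<exists>B'. finite B' \<and> B' \<subseteq> K \<and> card B' \<le> card (insert b B) \<and> K \<subseteq> ms N' B'"
    proof (cases "K \<subseteq> ms N' B")
      case True
      have "card B0 \<le> card (insert b B)" using B0(3) insert.hyps by simp
      moreover have "K \<subseteq> ms N' B0" using True B0(4) by blast
      ultimately show ?thesis using B0(1,2) by (intro exI[of _ B0]) blast
    next
      case False
      then obtain x0 where x0: "x0 \<in> K" "x0 \<notin> ms N' B" by blast
      obtain d0 where d0: "x0 - smult d0 b \<in> ms N' B"
        using ms_insert[OF insert.hyps N'] x0 K by blast
      have d00: "d0 \<noteq> 0"
      proof
        assume "d0 = 0" hence "x0 \<in> ms N' B" using d0 by (simp add: sm_zeroc)
        thus False using x0(2) by blast
      qed
      have MS: "ksub (ms N' B)" using ms_ksub[OF N'] .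
      have K1: "ksub K" using K by blast
      let ?B' = "insert x0 B0"
      have W: "ksub (ms N' ?B')" using ms_ksub[OF N'] by blast
      have "K \<subseteq> ms N' ?B'"
      proof
        fix x assume xK: "x \<in> K"
        obtain d where d: "x - smult d b \<in> ms N' B"
          using ms_insert[OF insert.hyps N'] xK K by blast
        have eq: "x - smult (d / d0) x0 = (x - smult d b) - smult (d / d0) (x0 - smult d0 b)"
          using d00 by (simp add: sm_diff sm_mult[symmetric])
        have "x - smult (d / d0) x0 \<in> ms N' B"
          unfolding eq by (rule ksub_diff[OF MS d ksub_sm[OF MS d0]])
        moreover have "x - smult (d / d0) x0 \<in> K" by (rule ksub_diff[OF K1 xK ksub_sm[OF K1 x0(1)]])
        ultimately have "x - smult (d / d0) x0 \<in> ms N' B0" using B0 by blast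
        hence "x - smult (d / d0) x0 \<in> ms N' ?B'" using ms_mono[OF N', of ?B' N' B0] B0 by blast
        moreover have "smult (d / d0) x0 \<in> ms N' ?B'" using ms_base[OF _ N', of ?B'] B0 ksub_sm[OF W] by blast
        ultimately have "(x - smult (d / d0) x0) + smult (d / d0) x0 \<in> ms N' ?B'" by (rule ksub_add[OF W])
        thus "x \<in> ms N' ?B'" by simp
      qed
      moreover have "card ?B' \<le> card (insert b B)"
        using B0 insert.hyps by (simp add: card_insert_if)
      moreover have "finite ?B'" "?B' \<subseteq> K" using B0(1,2) x0(1) by auto
      ultimately show ?thesis by (intro exI[of _ ?B']) blast
    qed
  qed
qed

lemma fdim_sub:
  assumes "ksub K" "ksub N'" "fdim N N'" "N' \<subseteq> K" "K \<subseteq> N"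
  shows "fdim K N'"
proof -
  obtain B where "spans N N' B" using assms unfolding fdim_def by blast
  hence "finite B" "K \<subseteq> ms N' B" using assms unfolding spans_def by auto
  then obtain B' where "finite B'" "B' \<subseteq> K" "K \<subseteq> ms N' B'"
    using subsp_aux[OF _ assms(2)] assms by meson
  thus ?thesis unfolding fdim_def spans_def by blast
qed

end


context hc
begin

abbreviation tsi where "tsi I \<equiv> two_sided_ideal G I"
abbreviation ipow where "ipow m j \<equiv> idealpow G m j"

lemma tsi_sub: "tsi I \<Longrightarrow> I \<subseteq> G" unfolding two_sided_ideal_def by blast
lemma tsi_0: "tsi I \<Longrightarrow> 0 \<in> I" unfolding two_sided_ideal_def by blast
lemma tsi_add: "tsi I \<Longrightarrow> x \<in> I \<Longrightarrow> y \<in> I \<Longrightarrow> x + y \<in> I" unfolding two_sided_ideal_def by blast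
lemma tsi_ml: "tsi I \<Longrightarrow> g \<in> G \<Longrightarrow> x \<in> I \<Longrightarrow> g * x \<in> I" unfolding two_sided_ideal_def by blast
lemma tsi_mr: "tsi I \<Longrightarrow> g \<in> G \<Longrightarrow> x \<in> I \<Longrightarrow> x * g \<in> I" unfolding two_sided_ideal_def by blast
lemma tsi_lsm: "tsi I \<Longrightarrow> lsm I" unfolding two_sided_ideal_def left_submod_def by blast
lemma tsi_neg: "tsi I \<Longrightarrow> x \<in> I \<Longrightarrow> - x \<in> I" using tsi_lsm lsm_neg by blast
lemma tsi_diff: "tsi I \<Longrightarrow> x \<in> I \<Longrightarrow> y \<in> I \<Longrightarrow> x - y \<in> I" using tsi_lsm lsm_diff by blast
lemma tsi_ksub: "tsi I \<Longrightarrow> ksub I" using tsi_lsm lsm_ksub by blast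
lemma tsi_G: "tsi G" unfolding two_sided_ideal_def using G0 Gadd Gmul by blast

lemma setmul_tsi: assumes "tsi X" "tsi Y" shows "tsi (setmul X Y)"
  unfolding two_sided_ideal_def
proof (intro conjI ballI)
  show "setmul X Y \<subseteq> G"
    by (rule setmul_least) (use G0 Gadd Gmul tsi_sub[OF assms(1)] tsi_sub[OF assms(2)] in blast)+
  show "0 \<in> setmul X Y" by (rule setmul_0)
  show "\<And>x y. x \<in> setmul X Y \<Longrightarrow> y \<in> setmul X Y \<Longrightarrow> x + y \<in> setmul X Y" by (rule setmul_add)
  fix g x assume g: "g \<in> G" and x: "x \<in> setmul X Y"
  have "setmul X Y \<subseteq> {s. g * s \<in> setmul X Y}"
  proof (rule setmul_least)
    show "0 \<in> {s. g * s \<in> setmul X Y}" by (simp add: setmul_0)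
    show "\<And>a b. a \<in> {s. g * s \<in> setmul X Y} \<Longrightarrow> b \<in> {s. g * s \<in> setmul X Y} \<Longrightarrow> a + b \<in> {s. g * s \<in> setmul X Y}"
      by (simp add: distrib_left setmul_add)
    fix a b assume "a \<in> X" "b \<in> Y"
    hence "(g * a) * b \<in> setmul X Y" using tsi_ml[OF assms(1) g] setmul_prod by blast
    thus "a * b \<in> {s. g * s \<in> setmul X Y}" by (simp add: mult.assoc)
  qed
  thus "g * x \<in> setmul X Y" using x by blast
  have "setmul X Y \<subseteq> {s. s * g \<in> setmul X Y}"
  proof (rule setmul_least)
    show "0 \<in> {s. s * g \<in> setmul X Y}" by (simp add: setmul_0)
    show "\<And>a b. a \<in> {s. s * g \<in> setmul X Y} \<Longrightarrow> b \<in> {s. s * g \<in> setmul X Y} \<Longrightarrow> a + b \<in> {s. s * g \<in> setmul X Y}"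
      by (simp add: distrib_right setmul_add)
    fix a b assume "a \<in> X" "b \<in> Y"
    hence "a * (b * g) \<in> setmul X Y" using tsi_mr[OF assms(2) g] setmul_prod by blast
    thus "a * b \<in> {s. s * g \<in> setmul X Y}" by (simp add: mult.assoc)
  qed
  thus "x * g \<in> setmul X Y" using x by blast
qed

lemma ipow_tsi: "tsi m \<Longrightarrow> tsi (ipow m j)"
  by (induction j) (auto simp: tsi_G setmul_tsi)

lemma setmul_right_G: assumes "tsi I" shows "setmul I G = I"
proof
  show "setmul I G \<subseteq> I" by (rule setmul_least) (use tsi_0 tsi_add tsi_mr assms in blast)+
  show "I \<subseteq> setmul I G"
  proof
    fix x assume "x \<in> I" hence "x * 1 \<in> setmul I G" using setmul_prod G1 by blast
    thus "x \<in> setmul I G" by simp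
  qed
qed

lemma setmul_left_G: assumes "tsi I" shows "setmul G I = I"
proof
  show "setmul G I \<subseteq> I" by (rule setmul_least) (use tsi_0 tsi_add tsi_ml assms in blast)+
  show "I \<subseteq> setmul G I"
  proof
    fix x assume "x \<in> I" hence "1 * x \<in> setmul G I" using setmul_prod G1 by blast
    thus "x \<in> setmul G I" by simp
  qed
qed

lemma setmul_assoc_sub: "setmul X (setmul Y Z) \<subseteq> setmul (setmul X Y) Z"
proof (rule setmul_least)
  show "0 \<in> setmul (setmul X Y) Z" by (rule setmul_0)
  show "\<And>a b. a \<in> setmul (setmul X Y) Z \<Longrightarrow> b \<in> setmul (setmul X Y) Z \<Longrightarrow> a + b \<in> setmul (setmul X Y) Z"
    by (rule setmul_add)
  fix x s assume x: "x \<in> X" and s: "s \<in> setmul Y Z"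
  have "setmul Y Z \<subseteq> {s. x * s \<in> setmul (setmul X Y) Z}"
  proof (rule setmul_least)
    show "0 \<in> {s. x * s \<in> setmul (setmul X Y) Z}" by (simp add: setmul_0)
    show "\<And>a b. a \<in> {s. x * s \<in> setmul (setmul X Y) Z} \<Longrightarrow> b \<in> {s. x * s \<in> setmul (setmul X Y) Z} \<Longrightarrow> a + b \<in> {s. x * s \<in> setmul (setmul X Y) Z}"
      by (simp add: distrib_left setmul_add)
    fix y z assume "y \<in> Y" "z \<in> Z"
    hence "(x * y) * z \<in> setmul (setmul X Y) Z" using x setmul_prod by blast
    thus "y * z \<in> {s. x * s \<in> setmul (setmul X Y) Z}" by (simp add: mult.assoc)
  qed
  thus "x * s \<in> setmul (setmul X Y) Z" using s by blast
qed

lemma ipow_Suc_sub: assumes "tsi m" shows "ipow m (Suc j) \<subseteq> setmul (ipow m j) m"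
proof (induction j)
  case 0
  have "ipow m (Suc 0) = m" using setmul_right_G[OF assms] by simp
  also have "\<dots> = setmul G m" using setmul_left_G[OF assms] by simp
  finally show ?case by simp
next
  case (Suc j)
  have "ipow m (Suc (Suc j)) = setmul m (ipow m (Suc j))" by simp
  also have "\<dots> \<subseteq> setmul m (setmul (ipow m j) m)" using Suc by (intro setmul_mono) auto
  also have "\<dots> \<subseteq> setmul (setmul m (ipow m j)) m" by (rule setmul_assoc_sub)
  finally show ?case by simp
qed

lemma ipow_dec1: assumes "tsi m" shows "ipow m (Suc j) \<subseteq> ipow m j"
proof -
  have "ipow m (Suc j) = setmul m (ipow m j)" by simp
  also have "\<dots> \<subseteq> setmul G (ipow m j)" using tsi_sub[OF assms] by (intro setmul_mono) auto
  also have "\<dots> = ipow m j" using setmul_left_G[OF ipow_tsi[OF assms]] .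
  finally show ?thesis .
qed

lemma ipow_dec: assumes "tsi m" "i \<le> j" shows "ipow m j \<subseteq> ipow m i"
  using assms(2)
proof (induction j)
  case 0 thus ?case by simp
next
  case (Suc j) thus ?case using ipow_dec1[OF assms(1), of j] by (cases "i = Suc j") auto
qed

lemma ipow_1: assumes "tsi m" shows "ipow m (Suc 0) = m"
  using setmul_right_G[OF assms] by simp

lemma power_in_ipow: assumes "tsi m" "x \<in> m" shows "x ^ j \<in> ipow m j"
proof (induction j)
  case 0 thus ?case using G1 by simp
next
  case (Suc j) thus ?case using setmul_prod[OF assms(2) Suc] by simp
qed

lemma setmul_apply:
  assumes W: "lsm W" and H: "\<And>x y. x \<in> X \<Longrightarrow> y \<in> Y \<Longrightarrow> x * (y * v) \<in> W" and s: "s \<in> setmul X Y"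
  shows "s * v \<in> W"
proof -
  have "setmul X Y \<subseteq> {s. s * v \<in> W}"
  proof (rule setmul_least)
    show "0 \<in> {s. s * v \<in> W}" using lsm_0[OF W] by simp
    show "\<And>a b. a \<in> {s. s * v \<in> W} \<Longrightarrow> b \<in> {s. s * v \<in> W} \<Longrightarrow> a + b \<in> {s. s * v \<in> W}"
      using lsm_add[OF W] by (simp add: distrib_right)
    show "\<And>x y. x \<in> X \<Longrightarrow> y \<in> Y \<Longrightarrow> x * y \<in> {s. s * v \<in> W}"
      using H by (simp add: mult.assoc)
  qed
  thus ?thesis using s by blast
qed

lemma one_minus_power:
  assumes J: "tsi J" and x: "x \<in> G" and h: "1 - x \<in> J" shows "1 - x ^ a \<in> J"
proof (induction a)
  case 0 thus ?case using tsi_0[OF J] by simp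
next
  case (Suc a)
  have eq: "1 - x ^ Suc a = (1 - x) + x * (1 - x ^ a)" by (simp add: algebra_simps)
  have "x * (1 - x ^ a) \<in> J" using tsi_ml[OF J x Suc] .
  thus ?case unfolding eq by (rule tsi_add[OF J h])
qed

lemma tsi_ssum: assumes "tsi I" "tsi J" shows "tsi (ssum I J)"
  unfolding two_sided_ideal_def
proof (intro conjI ballI)
  show "ssum I J \<subseteq> G" unfolding ssum_def using tsi_sub assms Gadd by blast
  show "0 \<in> ssum I J" using ssum_I[OF tsi_0[OF assms(1)] tsi_0[OF assms(2)]] by simp
  show "\<And>x y. x \<in> ssum I J \<Longrightarrow> y \<in> ssum I J \<Longrightarrow> x + y \<in> ssum I J"
    using ssum_lsm[OF tsi_lsm[OF assms(1)] tsi_lsm[OF assms(2)]] lsm_add by blast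
  fix g x assume g: "g \<in> G" and x: "x \<in> ssum I J"
  from x obtain a b where ab: "a \<in> I" "b \<in> J" "x = a + b" by (rule ssum_E)
  have "g * a + g * b \<in> ssum I J" using ssum_I tsi_ml assms g ab by blast
  thus "g * x \<in> ssum I J" using ab by (simp add: distrib_left)
  have "a * g + b * g \<in> ssum I J" using ssum_I tsi_mr assms g ab by blast
  thus "x * g \<in> ssum I J" using ab by (simp add: distrib_right)
qed

lemma max_tsi: "maximal_ideal G m \<Longrightarrow> tsi m" unfolding maximal_ideal_def by blast

lemma comax1:
  assumes n: "maximal_ideal G n" and p: "maximal_ideal G p" and np: "n \<noteq> p"
  shows "\<exists>x\<in>n. 1 - x \<in> p"
proof -
  have tn: "tsi n" and tp: "tsi p" using n p max_tsi by auto
  have S: "tsi (ssum n p)" using tsi_ssum tn tp by blast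
  have "n \<subseteq> ssum n p" using ssum_left[OF tsi_0[OF tp]] .
  hence "ssum n p = n \<or> ssum n p = G" using n S unfolding maximal_ideal_def by blast
  moreover have "ssum n p \<noteq> n"
  proof
    assume "ssum n p = n"
    hence "p \<subseteq> n" using ssum_right[OF tsi_0[OF tn], of p] by simp
    hence "n = p \<or> n = G" using p tn unfolding maximal_ideal_def by blast
    thus False using np n unfolding maximal_ideal_def by blast
  qed
  ultimately have "1 \<in> ssum n p" using G1 by simp
  then obtain a b where ab: "a \<in> n" "b \<in> p" "1 = a + b" by (rule ssum_E)
  have "1 - a = b" using ab(3) by (metis add_diff_cancel_left')
  thus ?thesis using ab by auto
qed

lemma comax:
  assumes n: "maximal_ideal G n" and p: "maximal_ideal G p" and np: "n \<noteq> p"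
  shows "\<exists>e\<in>ipow n a. 1 - e \<in> ipow p b"
proof -
  have tn: "tsi n" and tp: "tsi p" using n p max_tsi by auto
  obtain x where x: "x \<in> n" "1 - x \<in> p" using comax1[OF n p np] by blast
  have xG: "x \<in> G" using x tsi_sub[OF tn] by blast
  let ?y = "1 - x ^ a"
  have y: "?y \<in> p" using one_minus_power[OF tp xG x(2)] .
  have yG: "?y \<in> G" using y tsi_sub[OF tp] by blast
  have "1 - ?y \<in> ipow n a" using power_in_ipow[OF tn x(1)] by simp
  hence "1 - ?y ^ b \<in> ipow n a" using one_minus_power[OF ipow_tsi[OF tn] yG] by blast
  moreover have "1 - (1 - ?y ^ b) \<in> ipow p b" using power_in_ipow[OF tp y] by simp
  ultimately show ?thesis by blast
qed

lemma crt:
  assumes fin: "finite F" and p: "maximal_ideal G p"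
    and F: "\<forall>n\<in>F. maximal_ideal G n \<and> n \<noteq> p"
  shows "\<exists>i\<in>G. (\<forall>n\<in>F. i \<in> ipow n (j n)) \<and> 1 - i \<in> ipow p b"
  using fin F
proof (induction F rule: finite_induct)
  case empty
  have "1 - 1 \<in> ipow p b" using tsi_0[OF ipow_tsi[OF max_tsi[OF p]]] by simp
  thus ?case using G1 by blast
next
  case (insert n F)
  have tp: "tsi (ipow p b)" using ipow_tsi max_tsi p by blast
  obtain i where i: "i \<in> G" "\<forall>n\<in>F. i \<in> ipow n (j n)" "1 - i \<in> ipow p b" using insert by auto
  have nm: "maximal_ideal G n" "n \<noteq> p" using insert.prems by auto
  obtain e where e: "e \<in> ipow n (j n)" "1 - e \<in> ipow p b" using comax[OF nm(1) p nm(2)] by blast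
  have tn: "tsi (ipow n (j n))" using ipow_tsi max_tsi nm by blast
  have eG: "e \<in> G" using e tsi_sub[OF tn] by blast
  have "e * i \<in> G" using Gmul eG i by blast
  moreover have "e * i \<in> ipow n (j n)" using tsi_mr[OF tn i(1) e(1)] .
  moreover have "\<forall>n'\<in>F. e * i \<in> ipow n' (j n')"
  proof
    fix n' assume "n' \<in> F"
    hence "tsi (ipow n' (j n'))" "i \<in> ipow n' (j n')" using insert.prems i ipow_tsi max_tsi by auto
    thus "e * i \<in> ipow n' (j n')" using tsi_ml eG by blast
  qed
  moreover have "1 - e * i \<in> ipow p b"
  proof -
    have eq: "1 - e * i = (1 - e) + e * (1 - i)" by (simp add: algebra_simps)
    have "e * (1 - i) \<in> ipow p b" using tsi_ml[OF tp eG i(3)] .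
    thus ?thesis unfolding eq by (rule tsi_add[OF tp e(2)])
  qed
  ultimately show ?case by blast
qed

end


context hc
begin

definition lspan :: "'a set \<Rightarrow> 'a set" where
  "lspan F = {y. \<exists>c. (\<forall>f\<in>F. c f \<in> G) \<and> y = (\<Sum>f\<in>F. c f * f)}"

lemma lspan_lideal: assumes "F \<subseteq> G" shows "left_ideal G (lspan F)"
  unfolding left_ideal_def
proof (intro conjI ballI)
  show "lspan F \<subseteq> G"
  proof
    fix y assume "y \<in> lspan F"
    then obtain c where c: "\<forall>f\<in>F. c f \<in> G" "y = (\<Sum>f\<in>F. c f * f)" unfolding lspan_def by blast
    show "y \<in> G" unfolding c(2) by (rule Gsum) (use c(1) assms Gmul in blast)
  qed
  have "(0::'a) = (\<Sum>f\<in>F. 0 * f)" by simp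
  moreover have "\<forall>f\<in>F. (0::'a) \<in> G" using G0 by blast
  ultimately show "0 \<in> lspan F" unfolding lspan_def by (intro CollectI exI[of _ "\<lambda>_. 0"]) blast
  fix x y assume "x \<in> lspan F" "y \<in> lspan F"
  then obtain c d where c: "\<forall>f\<in>F. c f \<in> G" "x = (\<Sum>f\<in>F. c f * f)"
    and d: "\<forall>f\<in>F. d f \<in> G" "y = (\<Sum>f\<in>F. d f * f)" unfolding lspan_def by blast
  have "x + y = (\<Sum>f\<in>F. (c f + d f) * f)" using c d by (simp add: distrib_right sum.distrib)
  moreover have "\<forall>f\<in>F. c f + d f \<in> G" using c d Gadd by blast
  ultimately show "x + y \<in> lspan F" unfolding lspan_def by (intro CollectI exI[of _ "\<lambda>f. c f + d f"]) blast
next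
  fix g x assume g: "g \<in> G" and "x \<in> lspan F"
  then obtain c where c: "\<forall>f\<in>F. c f \<in> G" "x = (\<Sum>f\<in>F. c f * f)" unfolding lspan_def by blast
  have "g * x = (\<Sum>f\<in>F. (g * c f) * f)" using c by (simp add: sum_distrib_left mult.assoc)
  moreover have "\<forall>f\<in>F. g * c f \<in> G" using c g Gmul by blast
  ultimately show "g * x \<in> lspan F" unfolding lspan_def by (intro CollectI exI[of _ "\<lambda>f. g * c f"]) blast
qed

lemma lspan_base: assumes "finite F" "f \<in> F" shows "f \<in> lspan F"
proof -
  have "(\<Sum>x\<in>F. (if x = f then 1 else 0) * x) = (\<Sum>x\<in>F. if x = f then f else 0)"
    by (rule sum.cong) auto
  also have "\<dots> = f" using assms by simp
  finally have "f = (\<Sum>x\<in>F. (if x = f then 1 else 0) * x)" by simp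
  moreover have "\<forall>x\<in>F. (if x = f then 1 else 0) \<in> G" using G0 G1 by simp
  ultimately show ?thesis unfolding lspan_def by (intro CollectI exI[of _ "\<lambda>x. if x = f then 1 else 0"]) blast
qed

lemma lideal_sum: "left_ideal G J \<Longrightarrow> (\<And>i. i \<in> I \<Longrightarrow> f i \<in> J) \<Longrightarrow> sum f I \<in> J"
proof (cases "finite I")
  case True thus "left_ideal G J \<Longrightarrow> (\<And>i. i \<in> I \<Longrightarrow> f i \<in> J) \<Longrightarrow> sum f I \<in> J"
    by (induction I rule: finite_induct) (auto simp: left_ideal_def)
qed (simp add: left_ideal_def)

lemma lspan_least: assumes J: "left_ideal G J" and F: "F \<subseteq> J" shows "lspan F \<subseteq> J"
proof
  fix y assume "y \<in> lspan F"
  then obtain c where c: "\<forall>f\<in>F. c f \<in> G" "y = (\<Sum>f\<in>F. c f * f)" unfolding lspan_def by blast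
  have "\<And>f. f \<in> F \<Longrightarrow> c f * f \<in> J" using c(1) F J unfolding left_ideal_def by blast
  thus "y \<in> J" unfolding c(2) by (rule lideal_sum[OF J])
qed

lemma lspan_mono: assumes "finite F'" "F' \<subseteq> G" "F \<subseteq> F'" shows "lspan F \<subseteq> lspan F'"
  by (rule lspan_least[OF lspan_lideal[OF assms(2)]]) (use lspan_base[OF assms(1)] assms(3) in blast)

lemma noeth_fg:
  assumes noeth: "noetherian G" and J: "left_ideal G J"
  shows "\<exists>F. finite F \<and> F \<subseteq> J \<and> J \<subseteq> lspan F"
proof (rule ccontr)
  assume H: "\<not> ?thesis"
  have JG: "J \<subseteq> G" using J unfolding left_ideal_def by blast
  define nx where "nx S = (SOME x. x \<in> J \<and> x \<notin> lspan S)" for S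
  have nx: "nx S \<in> J \<and> nx S \<notin> lspan S" if "finite S" "S \<subseteq> J" for S
  proof -
    have "\<exists>x. x \<in> J \<and> x \<notin> lspan S" using H that by blast
    thus ?thesis unfolding nx_def by (rule someI_ex)
  qed
  define Fs where "Fs = rec_nat {} (\<lambda>_ S. insert (nx S) S)"
  have Fs0: "Fs 0 = {}" and FsS: "\<And>n. Fs (Suc n) = insert (nx (Fs n)) (Fs n)" unfolding Fs_def by simp_all
  have inv: "finite (Fs n) \<and> Fs n \<subseteq> J" for n
  proof (induction n)
    case 0 thus ?case by (simp add: Fs0)
  next
    case (Suc n) thus ?case using nx[of "Fs n"] by (simp add: FsS)
  qed
  define I where "I n = lspan (Fs n)" for n
  have "\<forall>i. left_ideal G (I i) \<and> I i \<subseteq> I (Suc i)"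
  proof
    fix i
    have a: "left_ideal G (I i)" unfolding I_def using lspan_lideal inv JG by blast
    have "I i \<subseteq> I (Suc i)" unfolding I_def
      by (rule lspan_mono) (use inv[of "Suc i"] JG in \<open>auto simp: FsS\<close>)
    thus "left_ideal G (I i) \<and> I i \<subseteq> I (Suc i)" using a by blast
  qed
  then obtain N where N: "\<forall>i\<ge>N. I i = I N" using noeth unfolding noetherian_def by blast
  have "nx (Fs N) \<in> I (Suc N)" unfolding I_def
    using lspan_base[of "Fs (Suc N)" "nx (Fs N)"] inv[of "Suc N"] by (simp add: FsS)
  moreover have "I (Suc N) = I N" using spec[OF N, of "Suc N"] by simp
  ultimately have "nx (Fs N) \<in> I N" by simp
  thus False using nx[of "Fs N"] inv[of N] unfolding I_def by blast
qed

lemma tsi_lideal: "tsi I \<Longrightarrow> left_ideal G I" unfolding two_sided_ideal_def left_ideal_def by blast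

lemma quot_fin:
  assumes noeth: "noetherian G" and mt: "tsi m" and fc: "fin_codim smult G m"
  shows "\<exists>B. finite B \<and> B \<subseteq> G \<and> G \<subseteq> ms (ipow m k) B"
proof (induction k)
  case 0
  have "G \<subseteq> ms (ipow m 0) {}" using ms_N'[OF tsi_ksub[OF tsi_G]] by simp
  thus ?case by (intro exI[of _ "{}"]) simp
next
  case (Suc k)
  obtain Bk where Bk: "finite Bk" "Bk \<subseteq> G" "G \<subseteq> ms (ipow m k) Bk" using Suc by blast
  have tk: "tsi (ipow m k)" using ipow_tsi[OF mt] .
  obtain Fk where Fk: "finite Fk" "Fk \<subseteq> ipow m k" "ipow m k \<subseteq> lspan Fk"
    using noeth_fg[OF noeth tsi_lideal[OF tk]] by blast
  obtain B1 where B1: "finite B1" "B1 \<subseteq> G" "\<forall>g\<in>G. \<exists>c. g - (\<Sum>f\<in>B1. smult (c f) f) \<in> m"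
    using fc unfolding fin_codim_def by blast
  have B1': "G \<subseteq> ms m B1"
  proof
    fix g assume "g \<in> G"
    then obtain c where "g - (\<Sum>f\<in>B1. smult (c f) f) \<in> m" using B1(3) by blast
    thus "g \<in> ms m B1" using ms_sumform[OF B1(1)] by blast
  qed
  have FkG: "Fk \<subseteq> G" using Fk(2) tsi_sub[OF tk] by blast
  define B where "B = Bk \<union> (\<lambda>(b, f). b * f) ` (B1 \<times> Fk)"
  have finB: "finite B" unfolding B_def using Bk(1) B1(1) Fk(1) by simp
  have BG: "B \<subseteq> G" unfolding B_def using Bk(2) B1(2) FkG by (auto intro!: Gmul)
  have tS: "tsi (ipow m (Suc k))" using ipow_tsi[OF mt] .
  let ?W = "ms (ipow m (Suc k)) B"
  have W: "ksub ?W" using ms_ksub[OF tsi_ksub[OF tS]] .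
  have BW: "B \<subseteq> ?W" using ms_base[OF finB tsi_ksub[OF tS]] .
  have SW: "ipow m (Suc k) \<subseteq> ?W" using ms_N'[OF tsi_ksub[OF tS]] .
  have cf: "c * f \<in> ?W" if c: "c \<in> G" and f: "f \<in> Fk" for c f
  proof -
    obtain z where z: "z \<in> kspan B1" "c - z \<in> m" using B1' c unfolding ms_def by blast
    have "f \<in> ipow m k" using f Fk(2) by blast
    hence "(c - z) * f \<in> setmul m (ipow m k)" by (rule setmul_prod[OF z(2)])
    hence "(c - z) * f \<in> ipow m (Suc k)" by simp
    hence a: "(c - z) * f \<in> ?W" using SW by blast
    have K: "ksub {z. z * f \<in> ?W}" unfolding ksub_def
    proof (intro conjI ballI allI)
      show "0 \<in> {z. z * f \<in> ?W}" using ksub_0[OF W] by simp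
      fix x y assume "x \<in> {z. z * f \<in> ?W}" "y \<in> {z. z * f \<in> ?W}"
      thus "x + y \<in> {z. z * f \<in> ?W}" using ksub_add[OF W] by (simp add: distrib_right)
    next
      fix e x assume "x \<in> {z. z * f \<in> ?W}"
      hence "smult e (x * f) \<in> ?W" using ksub_sm[OF W] by simp
      thus "smult e x \<in> {z. z * f \<in> ?W}" by (simp add: sm_ml)
    qed
    have "B1 \<subseteq> {z. z * f \<in> ?W}" using BW f unfolding B_def by blast
    hence "z * f \<in> ?W" using kspan_least[OF K] z(1) by blast
    with a have "(c - z) * f + z * f \<in> ?W" using ksub_add[OF W] by blast
    thus ?thesis by (simp add: algebra_simps)
  qed
  have LW: "lspan Fk \<subseteq> ?W"
  proof
    fix y assume "y \<in> lspan Fk"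
    then obtain c where c: "\<forall>f\<in>Fk. c f \<in> G" "y = (\<Sum>f\<in>Fk. c f * f)" unfolding lspan_def by blast
    show "y \<in> ?W" unfolding c(2) by (rule ksub_sum[OF W]) (use cf c(1) in blast)
  qed
  have "G \<subseteq> ?W"
  proof
    fix g assume "g \<in> G"
    then obtain y where y: "y \<in> kspan Bk" "g - y \<in> ipow m k" using Bk(3) unfolding ms_def by blast
    have "y \<in> ?W" using kspan_least[OF W] BW y(1) unfolding B_def by blast
    moreover have "g - y \<in> ?W" using y(2) Fk(3) LW by blast
    ultimately have "(g - y) + y \<in> ?W" using ksub_add[OF W] by blast
    thus "g \<in> ?W" by simp
  qed
  thus ?case using finB BG by blast
qed

lemma setmul_lsm: assumes "\<forall>g\<in>G. \<forall>x\<in>X. g * x \<in> X" shows "lsm (setmul X Y)"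
  unfolding left_submod_def
proof (intro conjI ballI)
  show "0 \<in> setmul X Y" by (rule setmul_0)
  show "\<And>x y. x \<in> setmul X Y \<Longrightarrow> y \<in> setmul X Y \<Longrightarrow> x + y \<in> setmul X Y" by (rule setmul_add)
  fix g s assume g: "g \<in> G" and s: "s \<in> setmul X Y"
  have "setmul X Y \<subseteq> {s. g * s \<in> setmul X Y}"
  proof (rule setmul_least)
    show "0 \<in> {s. g * s \<in> setmul X Y}" by (simp add: setmul_0)
    show "\<And>a b. a \<in> {s. g * s \<in> setmul X Y} \<Longrightarrow> b \<in> {s. g * s \<in> setmul X Y} \<Longrightarrow> a + b \<in> {s. g * s \<in> setmul X Y}"
      by (simp add: distrib_left setmul_add)
    fix a b assume "a \<in> X" "b \<in> Y"
    hence "(g * a) * b \<in> setmul X Y" using assms g setmul_prod by blast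
    thus "a * b \<in> {s. g * s \<in> setmul X Y}" by (simp add: mult.assoc)
  qed
  thus "g * s \<in> setmul X Y" using s by blast
qed

lemma setmul_rmul: assumes "\<forall>y\<in>Y. y * g \<in> Y" "s \<in> setmul X Y" shows "s * g \<in> setmul X Y"
proof -
  have "setmul X Y \<subseteq> {s. s * g \<in> setmul X Y}"
  proof (rule setmul_least)
    show "0 \<in> {s. s * g \<in> setmul X Y}" by (simp add: setmul_0)
    show "\<And>a b. a \<in> {s. s * g \<in> setmul X Y} \<Longrightarrow> b \<in> {s. s * g \<in> setmul X Y} \<Longrightarrow> a + b \<in> {s. s * g \<in> setmul X Y}"
      by (simp add: distrib_right setmul_add)
    fix a b assume "a \<in> X" "b \<in> Y"
    hence "a * (b * g) \<in> setmul X Y" using assms setmul_prod by blast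
    thus "a * b \<in> {s. s * g \<in> setmul X Y}" by (simp add: mult.assoc)
  qed
  thus ?thesis using assms(2) by blast
qed

lemma lsm_sG: "lsm (setmul G X)" by (rule setmul_lsm) (use Gmul in blast)
lemma lsm_sU: "lsm (setmul UNIV X)" by (rule setmul_lsm) blast
lemma lsm_dbl: "lsm (dbl G a Y)" unfolding dbl_def
  by (rule setmul_lsm) (use lsm_mul[OF lsm_sG] in blast)
lemma dbl_rmul: "g \<in> G \<Longrightarrow> s \<in> dbl G a G \<Longrightarrow> s * g \<in> dbl G a G"
  unfolding dbl_def by (rule setmul_rmul) (use Gmul in blast)
lemma dbl_mem: "a \<in> dbl G a G"
proof -
  have "1 * a \<in> setmul G {a}" using setmul_prod G1 by blast
  hence "(1 * a) * 1 \<in> dbl G a G" unfolding dbl_def using setmul_prod G1 by blast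
  thus ?thesis by simp
qed

lemma fdim_dbl:
  assumes noeth: "noetherian G" and qc: "quasicentral G" and mt: "tsi m" and fc: "fin_codim smult G m"
  shows "fdim (ssum (dbl G a G) (setmul UNIV (ipow m k))) (setmul UNIV (ipow m k))"
proof -
  let ?D = "dbl G a G" and ?L = "setmul UNIV (ipow m k)"
  have "fg_right G ?D" using qc unfolding quasicentral_def by blast
  hence "\<exists>F. finite F \<and> F \<subseteq> ?D \<and> ?D = {\<Sum>f\<in>F. f * c f | c. \<forall>f\<in>F. c f \<in> G}"
    unfolding fg_right_def .
  then obtain F where F0: "finite F \<and> F \<subseteq> ?D \<and> ?D = {\<Sum>f\<in>F. f * c f | c. \<forall>f\<in>F. c f \<in> G}"
    by (rule exE)
  have F: "finite F" "F \<subseteq> ?D" "?D = {\<Sum>f\<in>F. f * c f | c. \<forall>f\<in>F. c f \<in> G}"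
    using F0 by (rule conjunct1, rule conjunct1[OF conjunct2], rule conjunct2[OF conjunct2])
  obtain Bk where Bk: "finite Bk" "Bk \<subseteq> G" "G \<subseteq> ms (ipow m k) Bk" using quot_fin[OF noeth mt fc] by blast
  define S where "S = (\<lambda>(f, b). f * b) ` (F \<times> Bk)"
  have finS: "finite S" unfolding S_def using F(1) Bk(1) by simp
  have L: "lsm ?L" by (rule lsm_sU)
  have SD: "S \<subseteq> ?D" unfolding S_def using F(2) Bk(2) by (auto intro!: dbl_rmul)
  have DN: "?D \<subseteq> ssum ?D ?L" using ssum_left[OF lsm_0[OF L]] .
  let ?W = "ms ?L S"
  have W: "ksub ?W" using ms_ksub[OF lsm_ksub[OF L]] .
  have SW: "S \<subseteq> ?W" using ms_base[OF finS lsm_ksub[OF L]] .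
  have LW: "?L \<subseteq> ?W" using ms_N'[OF lsm_ksub[OF L]] .
  have fc_in: "f * c \<in> ?W" if f: "f \<in> F" and c: "c \<in> G" for f c
  proof -
    obtain z where z: "z \<in> kspan Bk" "c - z \<in> ipow m k" using Bk(3) c unfolding ms_def by blast
    have "f * (c - z) \<in> ?L" using setmul_prod[OF _ z(2)] by blast
    hence a: "f * (c - z) \<in> ?W" using LW by blast
    have K: "ksub {z. f * z \<in> ?W}" unfolding ksub_def
    proof (intro conjI ballI allI)
      show "0 \<in> {z. f * z \<in> ?W}" using ksub_0[OF W] by simp
      fix x y assume "x \<in> {z. f * z \<in> ?W}" "y \<in> {z. f * z \<in> ?W}"
      thus "x + y \<in> {z. f * z \<in> ?W}" using ksub_add[OF W] by (simp add: distrib_left)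
    next
      fix e x assume "x \<in> {z. f * z \<in> ?W}"
      hence "smult e (f * x) \<in> ?W" using ksub_sm[OF W] by simp
      thus "smult e x \<in> {z. f * z \<in> ?W}" by (simp add: sm_mul_comm)
    qed
    have "Bk \<subseteq> {z. f * z \<in> ?W}" using SW f unfolding S_def by blast
    hence "f * z \<in> ?W" using kspan_least[OF K] z(1) by blast
    with a have "f * (c - z) + f * z \<in> ?W" using ksub_add[OF W] by blast
    thus ?thesis by (simp add: algebra_simps)
  qed
  have "ssum ?D ?L \<subseteq> ?W"
  proof
    fix v assume "v \<in> ssum ?D ?L"
    then obtain d l where dl: "d \<in> ?D" "l \<in> ?L" "v = d + l" by (rule ssum_E)
    have "d \<in> {\<Sum>f\<in>F. f * c f | c. \<forall>f\<in>F. c f \<in> G}" using dl(1) F(3) by (simp only:)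
    then obtain c where c: "d = (\<Sum>f\<in>F. f * c f)" "\<forall>f\<in>F. c f \<in> G" by blast
    have "d \<in> ?W" unfolding c(1) by (rule ksub_sum[OF W]) (use fc_in c(2) in blast)
    thus "v \<in> ?W" using dl LW ksub_add[OF W] by blast
  qed
  thus ?thesis unfolding fdim_def spans_def using finS SD DN by blast
qed

end


context hc
begin

definition simple_pair :: "'a set \<Rightarrow> 'a set \<Rightarrow> bool" where
  "simple_pair X1 X2 \<longleftrightarrow> lsm X1 \<and> lsm X2 \<and> X1 \<subseteq> X2 \<and> X1 \<noteq> X2 \<and>
     (\<forall>W. lsm W \<and> X1 \<subseteq> W \<and> W \<subseteq> X2 \<longrightarrow> W = X1 \<or> W = X2)"

definition faithful :: "'a set \<Rightarrow> 'a set \<Rightarrow> 'a set \<Rightarrow> bool" where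
  "faithful I N' N \<longleftrightarrow> (\<forall>X Y. lsm X \<and> lsm Y \<and> N' \<subseteq> X \<and> X \<subseteq> Y \<and> Y \<subseteq> N \<and>
      (\<forall>i\<in>I. \<forall>y\<in>Y. i * y \<in> X) \<longrightarrow> Y \<subseteq> X)"

lemma faithfulD: "faithful I N' N \<Longrightarrow> lsm X \<Longrightarrow> lsm Y \<Longrightarrow> N' \<subseteq> X \<Longrightarrow> X \<subseteq> Y \<Longrightarrow> Y \<subseteq> N \<Longrightarrow>
      (\<And>i y. i \<in> I \<Longrightarrow> y \<in> Y \<Longrightarrow> i * y \<in> X) \<Longrightarrow> Y \<subseteq> X"
  unfolding faithful_def by blast

lemma faithful_trans:
  assumes K: "lsm K" and N: "lsm N" and sub: "N' \<subseteq> K" "K \<subseteq> N" and IG: "I \<subseteq> G"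
    and f1: "faithful I N' K" and f2: "faithful I K N"
  shows "faithful I N' N"
  unfolding faithful_def
proof (intro allI impI)
  fix X Y assume H: "lsm X \<and> lsm Y \<and> N' \<subseteq> X \<and> X \<subseteq> Y \<and> Y \<subseteq> N \<and> (\<forall>i\<in>I. \<forall>y\<in>Y. i * y \<in> X)"
  have X: "lsm X" and Y: "lsm Y" and XY: "X \<subseteq> Y" and YN: "Y \<subseteq> N" and N'X: "N' \<subseteq> X"
    and IY: "\<And>i y. i \<in> I \<Longrightarrow> y \<in> Y \<Longrightarrow> i * y \<in> X" using H by auto
  have a: "Y \<inter> K \<subseteq> X \<inter> K"
  proof (rule faithfulD[OF f1])
    show "lsm (X \<inter> K)" "lsm (Y \<inter> K)" using lsm_Int X Y K by auto
    show "N' \<subseteq> X \<inter> K" "X \<inter> K \<subseteq> Y \<inter> K" "Y \<inter> K \<subseteq> K" using N'X sub XY by auto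
    fix i y assume "i \<in> I" "y \<in> Y \<inter> K"
    thus "i * y \<in> X \<inter> K" using IY lsm_mul[OF K] IG by blast
  qed
  have b: "ssum Y K \<subseteq> ssum X K"
  proof (rule faithfulD[OF f2])
    show "lsm (ssum X K)" "lsm (ssum Y K)" using ssum_lsm X Y K by auto
    show "K \<subseteq> ssum X K" using ssum_right[OF lsm_0[OF X]] .
    show "ssum X K \<subseteq> ssum Y K" using XY unfolding ssum_def by blast
    show "ssum Y K \<subseteq> N" using ssum_sub[OF N] YN sub by blast
    fix i z assume i: "i \<in> I" and z: "z \<in> ssum Y K"
    from z obtain y k where yk: "y \<in> Y" "k \<in> K" "z = y + k" by (rule ssum_E)
    have "i * y + i * k \<in> ssum X K" using ssum_I IY[OF i yk(1)] lsm_mul[OF K _ yk(2)] i IG by blast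
    thus "i * z \<in> ssum X K" using yk by (simp add: distrib_left)
  qed
  show "Y \<subseteq> X"
  proof
    fix y assume y: "y \<in> Y"
    have "y + 0 \<in> ssum Y K" using ssum_I[OF y lsm_0[OF K]] .
    hence "y \<in> ssum X K" using b by auto
    then obtain x k where xk: "x \<in> X" "k \<in> K" "y = x + k" by (rule ssum_E)
    have "k = y - x" using xk by simp
    hence "k \<in> Y" using lsm_diff[OF Y y] xk XY by blast
    hence "k \<in> X" using a xk by blast
    thus "y \<in> X" using xk lsm_add[OF X] by blast
  qed
qed

definition imgm :: "'a set \<Rightarrow> 'a \<Rightarrow> 'a set" where "imgm X s = {x * s | x. x \<in> X}"

lemma imgm_lsm: assumes "lsm X" shows "lsm (imgm X s)"
  unfolding left_submod_def imgm_def
proof (intro conjI ballI)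
  show "0 \<in> {x * s |x. x \<in> X}" using lsm_0[OF assms] by force
  fix a b assume "a \<in> {x * s |x. x \<in> X}" "b \<in> {x * s |x. x \<in> X}"
  then obtain x y where "a = x * s" "b = y * s" "x \<in> X" "y \<in> X" by blast
  moreover have "x * s + y * s = (x + y) * s" by (simp add: distrib_right)
  ultimately show "a + b \<in> {x * s |x. x \<in> X}" using lsm_add[OF assms] by blast
next
  fix g a assume g: "g \<in> G" and "a \<in> {x * s |x. x \<in> X}"
  then obtain x where "a = x * s" "x \<in> X" by blast
  moreover have "g * (x * s) = (g * x) * s" by (simp add: mult.assoc)
  ultimately show "g * a \<in> {x * s |x. x \<in> X}" using lsm_mul[OF assms g] by blast
qed

lemma simple_pairD:
  "simple_pair X1 X2 \<Longrightarrow> lsm W \<Longrightarrow> X1 \<subseteq> W \<Longrightarrow> W \<subseteq> X2 \<Longrightarrow> W = X1 \<or> W = X2"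
  unfolding simple_pair_def by blast

lemma faithful_simple:
  assumes sp: "simple_pair T U" and IG: "I \<subseteq> G" and nI: "\<not> (\<forall>i\<in>I. \<forall>u\<in>U. i * u \<in> T)"
    and s: "s \<in> U" and A: "lsm A" "A \<subseteq> G"
  shows "faithful I {g \<in> A. g * s \<in> T} A"
  unfolding faithful_def
proof (intro allI impI)
  let ?A' = "{g \<in> A. g * s \<in> T}"
  fix X Y assume H: "lsm X \<and> lsm Y \<and> ?A' \<subseteq> X \<and> X \<subseteq> Y \<and> Y \<subseteq> A \<and> (\<forall>i\<in>I. \<forall>y\<in>Y. i * y \<in> X)"
  have X: "lsm X" and Y: "lsm Y" and XY: "X \<subseteq> Y" and YA: "Y \<subseteq> A" and A'X: "?A' \<subseteq> X"
    and IY: "\<And>i y. i \<in> I \<Longrightarrow> y \<in> Y \<Longrightarrow> i * y \<in> X" using H by auto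
  have T: "lsm T" and U: "lsm U" and TU: "T \<subseteq> U" and TnU: "T \<noteq> U" using sp unfolding simple_pair_def by auto
  let ?Xs = "ssum (imgm X s) T" and ?Ys = "ssum (imgm Y s) T"
  have XsL: "lsm ?Xs" "lsm ?Ys" using ssum_lsm imgm_lsm X Y T by auto
  have YsU: "?Ys \<subseteq> U"
  proof (rule ssum_sub[OF U _ TU])
    show "imgm Y s \<subseteq> U" unfolding imgm_def using lsm_mul[OF U _ s] YA A(2) by blast
  qed
  have XsYs: "?Xs \<subseteq> ?Ys" unfolding ssum_def imgm_def using XY by blast
  have TXs: "T \<subseteq> ?Xs" using ssum_right[of "imgm X s" T] lsm_0[OF imgm_lsm[OF X]] by blast
  have Ys: "?Ys = T \<or> ?Ys = U" using simple_pairD[OF sp XsL(2)] TXs XsYs YsU by blast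
  have Xs: "?Xs = T \<or> ?Xs = U" using simple_pairD[OF sp XsL(1)] TXs XsYs YsU by blast
  show "Y \<subseteq> X"
  proof
    fix y assume y: "y \<in> Y"
    have ys: "y * s + 0 \<in> ?Ys" using ssum_I[of "y * s" "imgm Y s" 0 T] y lsm_0[OF T] unfolding imgm_def by blast
    show "y \<in> X"
    proof (cases "?Ys = T")
      case True
      hence "y * s \<in> T" using ys by simp
      thus "y \<in> X" using A'X y YA by blast
    next
      case False
      hence YU: "?Ys = U" using Ys by blast
      have "?Xs = U"
      proof (rule ccontr)
        assume "?Xs \<noteq> U" hence XT: "?Xs = T" using Xs by blast
        have "\<forall>i\<in>I. \<forall>u\<in>U. i * u \<in> T"
        proof (intro ballI)
          fix i u assume i: "i \<in> I" and u: "u \<in> U"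
          hence "u \<in> ?Ys" using YU by simp
          then obtain a t where at: "a \<in> imgm Y s" "t \<in> T" "u = a + t" by (rule ssum_E)
          then obtain y' where y': "y' \<in> Y" "a = y' * s" unfolding imgm_def by blast
          have "(i * y') * s \<in> imgm X s" unfolding imgm_def using IY[OF i y'(1)] by blast
          hence "(i * y') * s + 0 \<in> ?Xs" using ssum_I lsm_0[OF T] by blast
          hence "(i * y') * s \<in> T" using XT by simp
          moreover have "i * t \<in> T" using lsm_mul[OF T _ at(2)] i IG by blast
          ultimately have "(i * y') * s + i * t \<in> T" using lsm_add[OF T] by blast
          thus "i * u \<in> T" using at y' by (simp add: distrib_left mult.assoc)
        qed
        thus False using nI by blast
      qed
      hence "y * s \<in> ?Xs" using ys YU by simp
      then obtain a t where at: "a \<in> imgm X s" "t \<in> T" "y * s = a + t" by (rule ssum_E)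
      then obtain x where x: "x \<in> X" "a = x * s" unfolding imgm_def by blast
      have "(y - x) * s = t" using at x by (simp add: algebra_simps)
      moreover have "y - x \<in> A" using lsm_diff[OF A(1)] y x XY YA by blast
      ultimately have "y - x \<in> X" using A'X at(2) by blast
      hence "(y - x) + x \<in> X" using lsm_add[OF X] x by blast
      thus "y \<in> X" by simp
    qed
  qed
qed

definition AnnS :: "'a set \<Rightarrow> 'a set \<Rightarrow> 'a set" where
  "AnnS T S = {g \<in> G. \<forall>b\<in>S. g * b \<in> T}"

lemma AnnS_lsm: assumes "lsm T" shows "lsm (AnnS T S)"
  unfolding left_submod_def AnnS_def
  using G0 Gadd Gmul lsm_0[OF assms] lsm_add[OF assms] lsm_mul[OF assms]
  by (auto simp: distrib_right mult.assoc)

lemma AnnS_insert: "AnnS T (insert s S) = {g \<in> AnnS T S. g * s \<in> T}"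
  unfolding AnnS_def by blast

lemma ann_aux:
  assumes sp: "simple_pair T U" and B: "finite B" "B \<subseteq> U" "U \<subseteq> ms T B"
    and S: "finite S" "S \<subseteq> U"
  shows "(\<exists>F. finite F \<and> F \<subseteq> G \<and> G \<subseteq> ms (AnnS T S) F) \<and>
         (\<forall>I. tsi I \<and> \<not> (\<forall>i\<in>I. \<forall>u\<in>U. i * u \<in> T) \<longrightarrow> faithful I (AnnS T S) G)"
  using S
proof (induction S rule: finite_induct)
  case empty
  have A0: "AnnS T {} = G" unfolding AnnS_def by blast
  have "G \<subseteq> ms G {}" using ms_N'[OF lsm_ksub[OF lsm_G]] .
  hence "finite {} \<and> {} \<subseteq> G \<and> G \<subseteq> ms (AnnS T {}) {}" unfolding A0 by simp
  hence a: "\<exists>F. finite F \<and> F \<subseteq> G \<and> G \<subseteq> ms (AnnS T {}) F" by (rule exI)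
  have "faithful I (AnnS T {}) G" for I unfolding A0 faithful_def by blast
  thus ?case using a by blast
next
  case (insert s S)
  have T: "lsm T" and U: "lsm U" and TU: "T \<subseteq> U" using sp unfolding simple_pair_def by auto
  have sU: "s \<in> U" and SU: "S \<subseteq> U" using insert.prems by auto
  have IH: "\<exists>F. finite F \<and> F \<subseteq> G \<and> G \<subseteq> ms (AnnS T S) F"
    "\<forall>I. tsi I \<and> \<not> (\<forall>i\<in>I. \<forall>u\<in>U. i * u \<in> T) \<longrightarrow> faithful I (AnnS T S) G"
    using insert.IH[OF SU] by auto
  let ?A = "AnnS T S" and ?A' = "AnnS T (insert s S)"
  have A: "lsm ?A" "?A \<subseteq> G" using AnnS_lsm[OF T] unfolding AnnS_def by auto
  have A': "lsm ?A'" using AnnS_lsm[OF T] by blast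
  have A'2: "?A' \<subseteq> ?A" unfolding AnnS_def by blast
  have fa: "\<forall>I. tsi I \<and> \<not> (\<forall>i\<in>I. \<forall>u\<in>U. i * u \<in> T) \<longrightarrow> faithful I ?A' G"
  proof (intro allI impI)
    fix I assume I: "tsi I \<and> \<not> (\<forall>i\<in>I. \<forall>u\<in>U. i * u \<in> T)"
    have IG: "I \<subseteq> G" using I tsi_sub by blast
    have "faithful I {g \<in> ?A. g * s \<in> T} ?A"
      using faithful_simple[OF sp IG _ sU A] I by blast
    hence f1: "faithful I ?A' ?A" unfolding AnnS_insert .
    show "faithful I ?A' G" by (rule faithful_trans[OF A(1) lsm_G A'2 A(2) IG f1]) (use IH(2) I in blast)
  qed
  obtain F where F: "finite F" "F \<subseteq> G" "G \<subseteq> ms ?A F" using IH(1) by blast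
  let ?Z = "ssum (imgm ?A s) T"
  have ZL: "lsm ?Z" using ssum_lsm imgm_lsm A(1) T by auto
  have TZ: "T \<subseteq> ?Z" using ssum_right[of "imgm ?A s" T] lsm_0[OF imgm_lsm[OF A(1)]] by blast
  have ZU: "?Z \<subseteq> U"
  proof (rule ssum_sub[OF U _ TU])
    show "imgm ?A s \<subseteq> U" unfolding imgm_def using lsm_mul[OF U _ sU] A(2) by blast
  qed
  have "\<exists>F. finite F \<and> F \<subseteq> G \<and> G \<subseteq> ms ?A' F"
  proof (cases "?Z = T")
    case True
    have "?A \<subseteq> ?A'"
    proof
      fix g assume g: "g \<in> ?A"
      have "g * s + 0 \<in> ?Z" using ssum_I[of "g * s" "imgm ?A s" 0 T] g lsm_0[OF T] unfolding imgm_def by blast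
      hence "g * s \<in> T" using True by simp
      thus "g \<in> ?A'" using g unfolding AnnS_insert by blast
    qed
    hence "?A' = ?A" using A'2 by blast
    thus ?thesis using F by auto
  next
    case False
    hence ZU': "?Z = U" using simple_pairD[OF sp ZL TZ ZU] by blast
    have "\<forall>b\<in>B. \<exists>a. a \<in> ?A \<and> a * s - b \<in> T"
    proof
      fix b assume "b \<in> B"
      hence "b \<in> ?Z" using B(2) ZU' by blast
      then obtain c t where ct: "c \<in> imgm ?A s" "t \<in> T" "b = c + t" by (rule ssum_E)
      then obtain a where a: "a \<in> ?A" "c = a * s" unfolding imgm_def by blast
      have "a * s - b = - t" using ct a by simp
      hence "a * s - b \<in> T" using lsm_neg[OF T ct(2)] by simp
      thus "\<exists>a. a \<in> ?A \<and> a * s - b \<in> T" using a by blast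
    qed
    then obtain a where a: "\<And>b. b \<in> B \<Longrightarrow> a b \<in> ?A \<and> a b * s - b \<in> T" by metis
    define F' where "F' = F \<union> a ` B"
    have finF': "finite F'" unfolding F'_def using F(1) B(1) by simp
    have F'G: "F' \<subseteq> G" unfolding F'_def using F(2) a A(2) by blast
    let ?W = "ms ?A' F'"
    have W: "ksub ?W" using ms_ksub[OF lsm_ksub[OF A'(1)]] .
    have F'W: "F' \<subseteq> ?W" using ms_base[OF finF' lsm_ksub[OF A'(1)]] .
    have A'W: "?A' \<subseteq> ?W" using ms_N'[OF lsm_ksub[OF A'(1)]] .
    have "G \<subseteq> ?W"
    proof
      fix g assume g: "g \<in> G"
      then obtain y where y: "y \<in> kspan F" "g - y \<in> ?A" using F(3) unfolding ms_def by blast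
      have yW: "y \<in> ?W" using kspan_least[OF W] F'W y(1) unfolding F'_def by blast
      let ?r = "g - y"
      have "?r * s \<in> U" using lsm_mul[OF U _ sU] y(2) A(2) by blast
      hence "?r * s \<in> ms T B" using B(3) by blast
      then obtain c where c: "?r * s - (\<Sum>b\<in>B. smult (c b) b) \<in> T" using ms_sumform[OF B(1)] by blast
      let ?q = "\<Sum>b\<in>B. smult (c b) (a b)"
      have qA: "?q \<in> ?A" by (rule lsm_sum[OF A(1)]) (use lsm_sm[OF A(1)] a in blast)
      have qW: "?q \<in> ?W" by (rule ksub_sum[OF W]) (use ksub_sm[OF W] a F'W F'_def in blast)
      have "?q * s = (\<Sum>b\<in>B. smult (c b) (a b * s))" by (simp add: sum_distrib_right sm_ml)
      hence "(?r - ?q) * s = (?r * s - (\<Sum>b\<in>B. smult (c b) b)) - (\<Sum>b\<in>B. smult (c b) (a b * s - b))"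
        by (simp add: algebra_simps sm_diff sum_subtractf)
      moreover have "(\<Sum>b\<in>B. smult (c b) (a b * s - b)) \<in> T"
        by (rule lsm_sum[OF T]) (use lsm_sm[OF T] a in blast)
      ultimately have "(?r - ?q) * s \<in> T" using lsm_diff[OF T c] by simp
      moreover have "?r - ?q \<in> ?A" using lsm_diff[OF A(1) y(2) qA] .
      ultimately have "?r - ?q \<in> ?A'" unfolding AnnS_insert by blast
      hence "?r - ?q \<in> ?W" using A'W by blast
      hence "(?r - ?q) + ?q + y \<in> ?W" using ksub_add[OF W] qW yW by blast
      thus "g \<in> ?W" by simp
    qed
    thus ?thesis using finF' F'G by blast
  qed
  thus ?case using fa by blast
qed

lemma ann_cfs:
  assumes sp: "simple_pair T U" and fd: "fdim U T"
  shows "{g \<in> G. \<forall>u\<in>U. g * u \<in> T} \<in> cfs smult G"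
proof -
  let ?P = "{g \<in> G. \<forall>u\<in>U. g * u \<in> T}"
  have T: "lsm T" and U: "lsm U" and TU: "T \<subseteq> U" and TnU: "T \<noteq> U" using sp unfolding simple_pair_def by auto
  obtain B where B: "finite B" "B \<subseteq> U" "U \<subseteq> ms T B" using fd unfolding fdim_def spans_def by blast
  have aux: "(\<exists>F. finite F \<and> F \<subseteq> G \<and> G \<subseteq> ms (AnnS T B) F) \<and>
         (\<forall>I. tsi I \<and> \<not> (\<forall>i\<in>I. \<forall>u\<in>U. i * u \<in> T) \<longrightarrow> faithful I (AnnS T B) G)"
    using ann_aux[OF sp B B(1,2)] .
  have PA: "AnnS T B = ?P"
  proof
    show "?P \<subseteq> AnnS T B" unfolding AnnS_def using B(2) by blast
    show "AnnS T B \<subseteq> ?P"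
    proof
      fix g assume g: "g \<in> AnnS T B"
      have gG: "g \<in> G" using g unfolding AnnS_def by blast
      have K: "ksub {u. g * u \<in> T}" unfolding ksub_def
      proof (intro conjI ballI allI)
        show "0 \<in> {u. g * u \<in> T}" using lsm_0[OF T] by simp
        fix x y assume "x \<in> {u. g * u \<in> T}" "y \<in> {u. g * u \<in> T}"
        thus "x + y \<in> {u. g * u \<in> T}" using lsm_add[OF T] by (simp add: distrib_left)
      next
        fix c x assume "x \<in> {u. g * u \<in> T}"
        hence "smult c (g * x) \<in> T" using lsm_sm[OF T] by simp
        thus "smult c x \<in> {u. g * u \<in> T}" by (simp add: sm_mul_comm)
      qed
      have "B \<subseteq> {u. g * u \<in> T}" using g unfolding AnnS_def by blast
      moreover have "T \<subseteq> {u. g * u \<in> T}" using lsm_mul[OF T gG] by blast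
      ultimately have "ms T B \<subseteq> {u. g * u \<in> T}" using ms_least[OF K] by blast
      thus "g \<in> ?P" using B(3) gG by blast
    qed
  qed
  have tP: "tsi ?P" unfolding two_sided_ideal_def
  proof (intro conjI ballI)
    show "?P \<subseteq> G" by blast
    show "0 \<in> ?P" using G0 lsm_0[OF T] by simp
    fix x y assume "x \<in> ?P" "y \<in> ?P"
    thus "x + y \<in> ?P" using Gadd lsm_add[OF T] by (simp add: distrib_right)
  next
    fix g x assume g: "g \<in> G" and x: "x \<in> ?P"
    show "g * x \<in> ?P" using Gmul g x lsm_mul[OF T g] by (simp add: mult.assoc)
    show "x * g \<in> ?P" using Gmul g x lsm_mul[OF U g] by (simp add: mult.assoc)
  qed
  have PG: "?P \<noteq> G"
  proof
    assume "?P = G" hence "1 \<in> ?P" using G1 by simp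
    hence "U \<subseteq> T" by auto
    thus False using TU TnU by blast
  qed
  have maxP: "\<forall>J. tsi J \<and> ?P \<subseteq> J \<longrightarrow> J = ?P \<or> J = G"
  proof (intro allI impI)
    fix J assume J: "tsi J \<and> ?P \<subseteq> J"
    show "J = ?P \<or> J = G"
    proof (cases "\<forall>i\<in>J. \<forall>u\<in>U. i * u \<in> T")
      case True
      hence "J \<subseteq> ?P" using J tsi_sub by blast
      thus ?thesis using J by blast
    next
      case False
      hence f: "faithful J ?P G" using aux J unfolding PA by blast
      have "G \<subseteq> J"
      proof (rule faithfulD[OF f])
        show "lsm J" using tsi_lsm J by blast
        show "lsm G" by (rule lsm_G)
        show "?P \<subseteq> J" "J \<subseteq> G" "G \<subseteq> G" using J tsi_sub by auto
        show "\<And>i y. i \<in> J \<Longrightarrow> y \<in> G \<Longrightarrow> i * y \<in> J" using J tsi_mr by blast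
      qed
      thus ?thesis using J tsi_sub by blast
    qed
  qed
  have "maximal_ideal G ?P" unfolding maximal_ideal_def using tP PG maxP by blast
  moreover have "fin_codim smult G ?P"
  proof -
    obtain F where F: "finite F" "F \<subseteq> G" "G \<subseteq> ms ?P F" using aux unfolding PA by blast
    have "\<forall>g\<in>G. \<exists>c. g - (\<Sum>f\<in>F. smult (c f) f) \<in> ?P" using F(3) ms_sumform[OF F(1)] by blast
    thus ?thesis unfolding fin_codim_def using F(1,2) by blast
  qed
  ultimately show ?thesis unfolding cfs_def by blast
qed

end


context hc
begin

lemma coords:
  assumes T: "lsm T" and V: "lsm V" and TV: "T \<subseteq> V" and fd: "fdim V T"
  shows "\<exists>\<phi> :: 'a \<Rightarrow> nat \<Rightarrow> 'k. (\<forall>v\<in>V. \<forall>w\<in>V. \<phi> (v + w) = \<phi> v + \<phi> w) \<and>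
                              (\<forall>v\<in>V. \<forall>w\<in>V. \<phi> v = \<phi> w \<longleftrightarrow> v - w \<in> T)"
proof -
  obtain B where B: "spans V T B" "card B = qd V T" using qd_spans[OF fd] by blast
  have finB: "finite B" and BV: "B \<subseteq> V" and VB: "V \<subseteq> ms T B" using B unfolding spans_def by auto
  have kT: "ksub T" using lsm_ksub[OF T] .
  have indep: "\<forall>b\<in>B. c b = 0" if c: "(\<Sum>b\<in>B. smult (c b) b) \<in> T" for c
  proof (rule ccontr)
    assume "\<not> (\<forall>b\<in>B. c b = 0)"
    then obtain b0 where b0: "b0 \<in> B" "c b0 \<noteq> 0" by blast
    have z: "(\<Sum>b\<in>B. smult (c b) b) - (\<Sum>b\<in>B. smult (c b) b) \<in> T" using lsm_0[OF T] by simp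
    have "ms T B \<subseteq> ms T (B - {b0})"
      by (rule drop_lemma[where K=T and N'=T and x="\<Sum>b\<in>B. smult (c b) b" and c=c, OF kT subset_refl finB c z b0])
    hence "spans V T (B - {b0})" using B finB BV VB unfolding spans_def by blast
    hence "qd V T \<le> card (B - {b0})" by (rule qd_le)
    also have "\<dots> < card B" using card_Diff1_less[OF finB b0(1)] .
    finally show False using B(2) by simp
  qed
  have uniq: "\<forall>b\<in>B. c b = d b" if c: "v - (\<Sum>b\<in>B. smult (c b) b) \<in> T" and d: "v - (\<Sum>b\<in>B. smult (d b) b) \<in> T" for v c d
  proof -
    have "(\<Sum>b\<in>B. smult (d b - c b) b) = (v - (\<Sum>b\<in>B. smult (c b) b)) - (v - (\<Sum>b\<in>B. smult (d b) b))"
      by (simp add: sm_diffc sum_subtractf)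
    hence "(\<Sum>b\<in>B. smult (d b - c b) b) \<in> T" using lsm_diff[OF T c d] by simp
    hence "\<forall>b\<in>B. d b - c b = 0" by (rule indep)
    thus ?thesis by simp
  qed
  define coef where "coef v = (SOME c. v - (\<Sum>b\<in>B. smult (c b) b) \<in> T)" for v
  have coef: "v - (\<Sum>b\<in>B. smult (coef v b) b) \<in> T" if "v \<in> V" for v
  proof -
    have "\<exists>c. v - (\<Sum>b\<in>B. smult (c b) b) \<in> T" using VB that ms_sumform[OF finB] by blast
    thus ?thesis unfolding coef_def by (rule someI_ex)
  qed
  obtain e where e: "bij_betw e {0..<card B} B" using ex_bij_betw_nat_finite[OF finB] by blast
  define \<phi> where "\<phi> v = (\<lambda>i. if i < card B then coef v (e i) else 0)" for v
  have phi_eq_coef: "\<phi> v = \<phi> w \<longleftrightarrow> (\<forall>b\<in>B. coef v b = coef w b)" for v w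
  proof
    assume H: "\<phi> v = \<phi> w"
    show "\<forall>b\<in>B. coef v b = coef w b"
    proof
      fix b assume "b \<in> B"
      hence "b \<in> e ` {0..<card B}" using e unfolding bij_betw_def by simp
      then obtain i where i: "i < card B" "b = e i" by auto
      have "\<phi> v i = \<phi> w i" using H by simp
      thus "coef v b = coef w b" using i unfolding \<phi>_def by simp
    qed
  next
    assume H: "\<forall>b\<in>B. coef v b = coef w b"
    show "\<phi> v = \<phi> w"
    proof
      fix i show "\<phi> v i = \<phi> w i"
      proof (cases "i < card B")
        case True
        hence "e i \<in> B" using e unfolding bij_betw_def by auto
        thus ?thesis using H True unfolding \<phi>_def by simp
      qed (simp add: \<phi>_def)
    qed
  qed
  have add: "\<phi> (v + w) = \<phi> v + \<phi> w" if v: "v \<in> V" and w: "w \<in> V" for v w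
  proof -
    have eqs: "(v + w) - (\<Sum>b\<in>B. smult (coef v b + coef w b) b) =
          (v - (\<Sum>b\<in>B. smult (coef v b) b)) + (w - (\<Sum>b\<in>B. smult (coef w b) b))"
      by (simp add: sm_addc sum.distrib)
    have "(v + w) - (\<Sum>b\<in>B. smult (coef v b + coef w b) b) \<in> T"
      unfolding eqs by (rule lsm_add[OF T coef[OF v] coef[OF w]])
    hence c: "\<forall>b\<in>B. coef (v + w) b = coef v b + coef w b"
      by (rule uniq[OF coef[OF lsm_add[OF V v w]], where d="\<lambda>b. coef v b + coef w b"])
    show ?thesis
    proof
      fix i show "\<phi> (v + w) i = (\<phi> v + \<phi> w) i"
      proof (cases "i < card B")
        case True
        hence "e i \<in> B" using e unfolding bij_betw_def by auto
        thus ?thesis using c True unfolding \<phi>_def by simp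
      qed (simp add: \<phi>_def)
    qed
  qed
  have eq: "\<phi> v = \<phi> w \<longleftrightarrow> v - w \<in> T" if v: "v \<in> V" and w: "w \<in> V" for v w
  proof
    assume "\<phi> v = \<phi> w"
    hence c: "\<forall>b\<in>B. coef v b = coef w b" using phi_eq_coef by blast
    hence s: "(\<Sum>b\<in>B. smult (coef v b) b) = (\<Sum>b\<in>B. smult (coef w b) b)" by (intro sum.cong) auto
    have "v - w = (v - (\<Sum>b\<in>B. smult (coef v b) b)) - (w - (\<Sum>b\<in>B. smult (coef w b) b))"
      using s by simp
    thus "v - w \<in> T" using lsm_diff[OF T coef[OF v] coef[OF w]] by simp
  next
    assume vw: "v - w \<in> T"
    have "w - (\<Sum>b\<in>B. smult (coef v b) b) = (v - (\<Sum>b\<in>B. smult (coef v b) b)) - (v - w)" by simp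
    hence "w - (\<Sum>b\<in>B. smult (coef v b) b) \<in> T" using lsm_diff[OF T coef[OF v] vw] by simp
    hence "\<forall>b\<in>B. coef v b = coef w b" using uniq[OF _ coef[OF w]] by blast
    thus "\<phi> v = \<phi> w" using phi_eq_coef by blast
  qed
  show ?thesis using add eq by blast
qed

lemma ext_split:
  assumes ev: "ext1_vanishes smult G q n0" and qG: "q \<subseteq> G" and n0G: "n0 \<subseteq> G"
    and spU: "simple_pair T U" and spV: "simple_pair U V"
    and n0U: "\<forall>g\<in>n0. \<forall>u\<in>U. g * u \<in> T" and qV: "\<forall>g\<in>q. \<forall>v\<in>V. g * v \<in> U"
    and fd: "fdim V T"
  shows "\<exists>C. lsm C \<and> T \<subseteq> C \<and> C \<subseteq> V \<and> C \<inter> U = T \<and> (\<forall>v\<in>V. \<exists>u\<in>U. \<exists>c\<in>C. v = u + c)"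
proof -
  have T: "lsm T" and U: "lsm U" and TU: "T \<subseteq> U" and TnU: "T \<noteq> U" using spU unfolding simple_pair_def by auto
  have V: "lsm V" and UV: "U \<subseteq> V" and UnV: "U \<noteq> V" using spV unfolding simple_pair_def by auto
  have TV: "T \<subseteq> V" using TU UV by blast
  obtain \<phi> :: "'a \<Rightarrow> nat \<Rightarrow> 'k" where
    padd: "\<And>v w. v \<in> V \<Longrightarrow> w \<in> V \<Longrightarrow> \<phi> (v + w) = \<phi> v + \<phi> w" and
    peq: "\<And>v w. v \<in> V \<Longrightarrow> w \<in> V \<Longrightarrow> \<phi> v = \<phi> w \<longleftrightarrow> v - w \<in> T"
    using coords[OF T V TV fd] by blast
  have V0: "0 \<in> V" using lsm_0[OF V] .
  have p0: "\<phi> 0 = 0" using padd[OF V0 V0] by simp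
  have pT: "\<phi> v = 0 \<longleftrightarrow> v \<in> T" if "v \<in> V" for v using peq[OF that V0] p0 by simp
  have pneg: "\<phi> (- v) = - \<phi> v" if v: "v \<in> V" for v
  proof -
    have "\<phi> v + \<phi> (- v) = 0" using padd[OF v lsm_neg[OF V v]] p0 by simp
    thus ?thesis by (simp add: eq_neg_iff_add_eq_0 add.commute)
  qed
  have pdiff: "\<phi> (v - w) = \<phi> v - \<phi> w" if "v \<in> V" "w \<in> V" for v w
    using padd[OF that(1) lsm_neg[OF V that(2)]] pneg[OF that(2)] by simp
  define E where "E = \<phi> ` V"
  define \<psi> where "\<psi> f = (SOME v. v \<in> V \<and> \<phi> v = f)" for f
  have psi: "\<psi> f \<in> V \<and> \<phi> (\<psi> f) = f" if "f \<in> E" for f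
  proof -
    have "\<exists>v. v \<in> V \<and> \<phi> v = f" using that unfolding E_def by blast
    thus ?thesis unfolding \<psi>_def by (rule someI_ex)
  qed
  define act where "act g f = \<phi> (g * \<psi> f)" for g f
  have act_phi: "act g (\<phi> v) = \<phi> (g * v)" if g: "g \<in> G" and v: "v \<in> V" for g v
  proof -
    have pv: "\<phi> v \<in> E" using v unfolding E_def by blast
    have "\<psi> (\<phi> v) - v \<in> T" using peq[OF _ v] psi[OF pv] by blast
    hence "g * (\<psi> (\<phi> v) - v) \<in> T" using lsm_mul[OF T g] by blast
    hence "g * \<psi> (\<phi> v) - g * v \<in> T" by (simp add: algebra_simps)
    moreover have "g * \<psi> (\<phi> v) \<in> V" "g * v \<in> V" using lsm_mul[OF V g] psi[OF pv] v by auto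
    ultimately show ?thesis unfolding act_def using peq by blast
  qed
  have Eelim: "\<And>f P. f \<in> E \<Longrightarrow> (\<And>v. v \<in> V \<Longrightarrow> f = \<phi> v \<Longrightarrow> P) \<Longrightarrow> P" unfolding E_def by blast
  have gm: "gmodule G act E" unfolding gmodule_def
  proof (intro conjI ballI)
    show "0 \<in> E" unfolding E_def using p0 V0 by force
  next
    fix f1 f2 assume "f1 \<in> E" "f2 \<in> E"
    then obtain v w where "v \<in> V" "w \<in> V" "f1 = \<phi> v" "f2 = \<phi> w" unfolding E_def by blast
    thus "f1 + f2 \<in> E" unfolding E_def using padd lsm_add[OF V] by (metis image_eqI)
  next
    fix f assume "f \<in> E"
    then obtain v where "v \<in> V" "f = \<phi> v" unfolding E_def by blast
    thus "- f \<in> E" unfolding E_def using pneg lsm_neg[OF V] by (metis image_eqI)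
  next
    fix g f assume g: "g \<in> G" and "f \<in> E"
    then obtain v where v: "v \<in> V" "f = \<phi> v" unfolding E_def by blast
    thus "act g f \<in> E" unfolding E_def using act_phi[OF g v(1)] lsm_mul[OF V g v(1)] by (metis image_eqI)
  next
    fix g h f assume g: "g \<in> G" and h: "h \<in> G" and "f \<in> E"
    then obtain v where v: "v \<in> V" "f = \<phi> v" unfolding E_def by blast
    have gv: "g * v \<in> V" "h * v \<in> V" "(g + h) * v = g * v + h * v" using lsm_mul[OF V] g h v by (auto simp: distrib_right)
    show "act (g + h) f = act g f + act h f"
      unfolding v(2) using act_phi[OF Gadd[OF g h] v(1)] act_phi[OF g v(1)] act_phi[OF h v(1)] padd[OF gv(1,2)] gv(3)
      by simp
    have "act (g * h) f = \<phi> (g * (h * v))" unfolding v(2) using act_phi[OF Gmul[OF g h] v(1)] by (simp add: mult.assoc)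
    moreover have "act g (act h f) = \<phi> (g * (h * v))" unfolding v(2) using act_phi[OF h v(1)] act_phi[OF g gv(2)] by simp
    ultimately show "act (g * h) f = act g (act h f)" by simp
  next
    fix g f1 f2 assume g: "g \<in> G" and "f1 \<in> E" "f2 \<in> E"
    then obtain v w where vw: "v \<in> V" "w \<in> V" "f1 = \<phi> v" "f2 = \<phi> w" unfolding E_def by blast
    have "act g (f1 + f2) = \<phi> (g * (v + w))" using vw padd act_phi[OF g lsm_add[OF V vw(1,2)]] by simp
    also have "\<dots> = \<phi> (g * v) + \<phi> (g * w)" using padd lsm_mul[OF V g] vw by (simp add: distrib_left)
    also have "\<dots> = act g f1 + act g f2" using act_phi[OF g] vw by simp
    finally show "act g (f1 + f2) = act g f1 + act g f2" .
  next
    fix f assume "f \<in> E"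
    then obtain v where v: "v \<in> V" "f = \<phi> v" unfolding E_def by blast
    thus "act 1 f = f" using act_phi[OF G1 v(1)] by simp
  qed
  have gs_img: "gsubmodule G act E (\<phi> ` X)" if X: "lsm X" "T \<subseteq> X" "X \<subseteq> V" for X
    unfolding gsubmodule_def
  proof (intro conjI ballI)
    show "\<phi> ` X \<subseteq> E" unfolding E_def using X by blast
    show "0 \<in> \<phi> ` X" using p0 lsm_0[OF X(1)] by force
  next
    fix a b assume "a \<in> \<phi> ` X" "b \<in> \<phi> ` X"
    then obtain v w where "v \<in> X" "w \<in> X" "a = \<phi> v" "b = \<phi> w" by blast
    thus "a + b \<in> \<phi> ` X" using padd X lsm_add[OF X(1)] by (metis image_eqI subsetD)
  next
    fix a assume "a \<in> \<phi> ` X"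
    then obtain v where "v \<in> X" "a = \<phi> v" by blast
    thus "- a \<in> \<phi> ` X" using pneg X lsm_neg[OF X(1)] by (metis image_eqI subsetD)
  next
    fix g a assume g: "g \<in> G" and "a \<in> \<phi> ` X"
    then obtain v where "v \<in> X" "a = \<phi> v" by blast
    thus "act g a \<in> \<phi> ` X" using act_phi[OF g] X lsm_mul[OF X(1) g] by (metis image_eqI subsetD)
  qed
  define pre where "pre L = {v \<in> V. \<phi> v \<in> L}" for L
  have pre_lsm: "lsm (pre L)" and T_pre: "T \<subseteq> pre L" and pre_V: "pre L \<subseteq> V" and img_pre: "\<phi> ` pre L = L"
    if L: "gsubmodule G act E L" for L
  proof -
    have L0: "0 \<in> L" and Ladd: "\<And>a b. a \<in> L \<Longrightarrow> b \<in> L \<Longrightarrow> a + b \<in> L"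
      and Lact: "\<And>g a. g \<in> G \<Longrightarrow> a \<in> L \<Longrightarrow> act g a \<in> L" and LE: "L \<subseteq> E"
      using L unfolding gsubmodule_def by auto
    show "lsm (pre L)" unfolding left_submod_def pre_def
    proof (intro conjI ballI)
      show "0 \<in> {v \<in> V. \<phi> v \<in> L}" using V0 p0 L0 by simp
      fix a b assume "a \<in> {v \<in> V. \<phi> v \<in> L}" "b \<in> {v \<in> V. \<phi> v \<in> L}"
      thus "a + b \<in> {v \<in> V. \<phi> v \<in> L}" using padd lsm_add[OF V] Ladd by auto
    next
      fix g a assume g: "g \<in> G" and a: "a \<in> {v \<in> V. \<phi> v \<in> L}"
      hence "act g (\<phi> a) \<in> L" "a \<in> V" using Lact[OF g] by auto
      hence "\<phi> (g * a) \<in> L" using act_phi[OF g] by simp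
      thus "g * a \<in> {v \<in> V. \<phi> v \<in> L}" using lsm_mul[OF V g] \<open>a \<in> V\<close> by simp
    qed
    show "T \<subseteq> pre L"
    proof
      fix x assume x: "x \<in> T"
      hence "x \<in> V" "\<phi> x = 0" using TV pT by auto
      thus "x \<in> pre L" unfolding pre_def using L0 by simp
    qed
    show "pre L \<subseteq> V" unfolding pre_def by blast
    show "\<phi> ` pre L = L"
    proof
      show "\<phi> ` pre L \<subseteq> L" unfolding pre_def by blast
      show "L \<subseteq> \<phi> ` pre L"
      proof
        fix a assume a: "a \<in> L"
        then obtain v where "v \<in> V" "a = \<phi> v" using LE unfolding E_def by blast
        thus "a \<in> \<phi> ` pre L" unfolding pre_def using a by blast
      qed
    qed
  qed
  have pre_img: "{v \<in> V. \<phi> v \<in> \<phi> ` X} = X" if X: "T \<subseteq> X" "X \<subseteq> V" "lsm X" for X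
  proof
    show "X \<subseteq> {v \<in> V. \<phi> v \<in> \<phi> ` X}" using X by blast
    show "{v \<in> V. \<phi> v \<in> \<phi> ` X} \<subseteq> X"
    proof
      fix v assume "v \<in> {v \<in> V. \<phi> v \<in> \<phi> ` X}"
      then obtain x where vx: "v \<in> V" "x \<in> X" "\<phi> v = \<phi> x" by blast
      hence "v - x \<in> T" using peq X by blast
      hence "(v - x) + x \<in> X" using X lsm_add[OF X(3)] vx by blast
      thus "v \<in> X" by simp
    qed
  qed
  have imgT: "\<phi> ` T = {0}"
  proof
    show "\<phi> ` T \<subseteq> {0}" using pT TV by auto
    have "\<phi> 0 \<in> \<phi> ` T" using lsm_0[OF T] by blast
    thus "{0} \<subseteq> \<phi> ` T" using p0 by simp
  qed
  let ?N = "\<phi> ` U"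
  have hyp: "gmodule G act E \<and> gsubmodule G act E ?N \<and>
        ?N \<noteq> {0} \<and> (\<forall>L. gsubmodule G act E L \<and> L \<subseteq> ?N \<longrightarrow> L = {0} \<or> L = ?N) \<and>
        (\<forall>g\<in>n0. \<forall>v\<in>?N. act g v = 0) \<and>
        ?N \<noteq> E \<and> (\<forall>L. gsubmodule G act E L \<and> ?N \<subseteq> L \<longrightarrow> L = ?N \<or> L = E) \<and>
        (\<forall>g\<in>q. \<forall>v\<in>E. act g v \<in> ?N)"
  proof (intro conjI allI impI ballI)
    show "gmodule G act E" by (rule gm)
    show "gsubmodule G act E ?N" using gs_img[OF U TU UV] .
    show "?N \<noteq> {0}"
    proof
      assume "?N = {0}"
      hence "U \<subseteq> T" using pT UV by auto
      thus False using TU TnU by blast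
    qed
  next
    fix L assume L: "gsubmodule G act E L \<and> L \<subseteq> ?N"
    have "pre L \<subseteq> U"
    proof
      fix v assume "v \<in> pre L"
      hence "v \<in> V" "\<phi> v \<in> ?N" using L unfolding pre_def by auto
      thus "v \<in> U" using pre_img[OF TU UV U] by blast
    qed
    moreover have "lsm (pre L)" "T \<subseteq> pre L" using pre_lsm T_pre L by blast+
    ultimately have "pre L = T \<or> pre L = U" using simple_pairD[OF spU] by blast
    thus "L = {0} \<or> L = ?N" using img_pre[of L] L imgT by auto
  next
    fix g v assume g: "g \<in> n0" and "v \<in> ?N"
    then obtain u where u: "u \<in> U" "v = \<phi> u" by blast
    have gu: "g * u \<in> T" using n0U g u by blast
    have "act g v = \<phi> (g * u)" using act_phi[of g u] g n0G u UV by auto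
    also have "\<dots> = 0" using pT[of "g * u"] gu TV by auto
    finally show "act g v = 0" .
  next
    show "?N \<noteq> E"
    proof
      assume "?N = E"
      hence "V \<subseteq> U" using pre_img[OF TU UV U] unfolding E_def by blast
      thus False using UV UnV by blast
    qed
  next
    fix L assume L: "gsubmodule G act E L \<and> ?N \<subseteq> L"
    have "U \<subseteq> pre L" using L UV unfolding pre_def by blast
    moreover have "lsm (pre L)" "pre L \<subseteq> V" using pre_lsm pre_V L by blast+
    ultimately have "pre L = U \<or> pre L = V" using simple_pairD[OF spV] by blast
    thus "L = ?N \<or> L = E" using img_pre[of L] L unfolding E_def by auto
  next
    fix g f assume g: "g \<in> q" and "f \<in> E"
    then obtain v where v: "v \<in> V" "f = \<phi> v" unfolding E_def by blast
    have "g * v \<in> U" using qV g v by blast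
    thus "act g f \<in> ?N" using act_phi[of g v] g qG v by auto
  qed
  obtain C' where C': "gsubmodule G act E C'" "?N \<inter> C' = {0}" "\<forall>v\<in>E. \<exists>x\<in>?N. \<exists>y\<in>C'. v = x + y"
    using mp[OF spec[OF spec[OF spec[OF ev[unfolded ext1_vanishes_def], of act], of E], of ?N] hyp] by blast
  let ?C = "pre C'"
  have "lsm ?C" "T \<subseteq> ?C" "?C \<subseteq> V" using pre_lsm T_pre pre_V C'(1) by auto
  moreover have "?C \<inter> U = T"
  proof
    show "T \<subseteq> ?C \<inter> U" using T_pre[OF C'(1)] TU by blast
    show "?C \<inter> U \<subseteq> T"
    proof
      fix v assume v: "v \<in> ?C \<inter> U"
      hence "\<phi> v \<in> ?N \<inter> C'" unfolding pre_def by blast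
      hence "\<phi> v = 0" using C'(2) by blast
      thus "v \<in> T" using pT v UV by blast
    qed
  qed
  moreover have "\<forall>v\<in>V. \<exists>u\<in>U. \<exists>c\<in>?C. v = u + c"
  proof
    fix v assume v: "v \<in> V"
    hence "\<phi> v \<in> E" unfolding E_def by blast
    then obtain x y where xy: "x \<in> ?N" "y \<in> C'" "\<phi> v = x + y" using C'(3) by blast
    then obtain u where u: "u \<in> U" "x = \<phi> u" by blast
    have uV: "u \<in> V" using u UV by blast
    have "\<phi> (v - u) = y" using pdiff[OF v uV] xy u by simp
    moreover have "v - u \<in> V" using lsm_diff[OF V v uV] .
    ultimately have "v - u \<in> ?C" unfolding pre_def using xy by blast
    moreover have "v = u + (v - u)" by simp
    ultimately show "\<exists>u\<in>U. \<exists>c\<in>?C. v = u + c" using u by blast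
  qed
  ultimately show ?thesis by blast
qed

end


context hc
begin

lemma exists_simple_above:
  assumes U: "lsm U" and R: "lsm R" and UR: "U \<subseteq> R" and nRU: "\<not> R \<subseteq> U" and fd: "fdim R U"
  shows "\<exists>V. simple_pair U V \<and> V \<subseteq> R"
proof -
  let ?P = "\<lambda>V. lsm V \<and> U \<subseteq> V \<and> V \<subseteq> R \<and> V \<noteq> U"
  have PR: "?P R" using R UR nRU by blast
  have bnd: "\<forall>V. ?P V \<longrightarrow> qd R V < Suc (qd R U)"
    using qd_mono[OF _ fd] lsm_ksub by (simp add: le_imp_less_Suc)
  obtain V where V: "?P V" and Vmax: "\<forall>W. ?P W \<longrightarrow> qd R W \<le> qd R V"
    using Lattices_Big.ex_has_greatest_nat[OF PR bnd] by blast
  have "simple_pair U V" unfolding simple_pair_def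
  proof (intro conjI allI impI)
    show "lsm U" "lsm V" "U \<subseteq> V" "U \<noteq> V" using U V by auto
    fix W assume W: "lsm W \<and> U \<subseteq> W \<and> W \<subseteq> V"
    show "W = U \<or> W = V"
    proof (rule ccontr)
      assume "\<not> (W = U \<or> W = V)"
      hence PW: "?P W" and WV: "\<not> V \<subseteq> W" using W V by auto
      have fdW: "fdim R W" using fdim_mono[OF lsm_ksub fd] W by blast
      have "qd R V < qd R W"
        by (rule qd_drop[OF lsm_ksub lsm_ksub fdW]) (use V W WV in auto)
      thus False using Vmax PW by fastforce
    qed
  qed
  thus ?thesis using V by blast
qed

lemma cfs_max: "n \<in> cfs smult G \<Longrightarrow> maximal_ideal G n" unfolding cfs_def by blast
lemma cfs_G: "n \<in> cfs smult G \<Longrightarrow> n \<subseteq> G" using cfs_max max_tsi tsi_sub by blast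

lemma split_bottom:
  assumes qc: "quasicommutative smult G" and n0: "n0 \<in> cfs smult G" and R: "lsm R"
  shows "\<forall>N' U. qd R U = d \<and> simple_pair N' U \<and> (\<forall>g\<in>n0. \<forall>u\<in>U. g * u \<in> N') \<and> U \<subseteq> R \<and> fdim R N' \<and>
        (\<forall>X Y. simple_pair X Y \<and> U \<subseteq> X \<and> Y \<subseteq> R \<longrightarrow> \<not> (\<forall>g\<in>n0. \<forall>y\<in>Y. g * y \<in> X)) \<longrightarrow>
        (\<exists>C. lsm C \<and> N' \<subseteq> C \<and> C \<subseteq> R \<and> C \<inter> U = N' \<and> (\<forall>v\<in>R. \<exists>u\<in>U. \<exists>c\<in>C. v = u + c))"
proof (induction d rule: less_induct)
  case (less d)
  show ?case
  proof (intro allI impI)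
    fix N' U
    assume H: "qd R U = d \<and> simple_pair N' U \<and> (\<forall>g\<in>n0. \<forall>u\<in>U. g * u \<in> N') \<and> U \<subseteq> R \<and> fdim R N' \<and>
        (\<forall>X Y. simple_pair X Y \<and> U \<subseteq> X \<and> Y \<subseteq> R \<longrightarrow> \<not> (\<forall>g\<in>n0. \<forall>y\<in>Y. g * y \<in> X))"
    have d: "qd R U = d" and sp: "simple_pair N' U" and n0U: "\<forall>g\<in>n0. \<forall>u\<in>U. g * u \<in> N'"
      and UR: "U \<subseteq> R" and fd: "fdim R N'"
      and Hy: "\<And>X Y. simple_pair X Y \<Longrightarrow> U \<subseteq> X \<Longrightarrow> Y \<subseteq> R \<Longrightarrow> \<not> (\<forall>g\<in>n0. \<forall>y\<in>Y. g * y \<in> X)"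
      using H by auto
    have N': "lsm N'" and U: "lsm U" and N'U: "N' \<subseteq> U" and N'nU: "N' \<noteq> U"
      using sp unfolding simple_pair_def by auto
    have fdU: "fdim R U" using fdim_mono[OF lsm_ksub[OF U] fd N'U] .
    show "\<exists>C. lsm C \<and> N' \<subseteq> C \<and> C \<subseteq> R \<and> C \<inter> U = N' \<and> (\<forall>v\<in>R. \<exists>u\<in>U. \<exists>c\<in>C. v = u + c)"
    proof (cases "R \<subseteq> U")
      case True
      have "\<forall>v\<in>R. \<exists>u\<in>U. \<exists>c\<in>N'. v = u + c"
      proof
        fix v assume "v \<in> R" hence "v \<in> U" using True by blast
        moreover have "v = v + 0" by simp
        ultimately show "\<exists>u\<in>U. \<exists>c\<in>N'. v = u + c" using lsm_0[OF N'] by blast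
      qed
      moreover have "N' \<subseteq> R" "N' \<inter> U = N'" using N'U UR by auto
      ultimately show ?thesis using N' by (intro exI[of _ N'] conjI) auto
    next
      case False
      obtain V where spV: "simple_pair U V" and VR: "V \<subseteq> R"
        using exists_simple_above[OF U R UR False fdU] by blast
      have V: "lsm V" and UV: "U \<subseteq> V" and UnV: "U \<noteq> V" using spV unfolding simple_pair_def by auto
      let ?q = "{g \<in> G. \<forall>v\<in>V. g * v \<in> U}"
      have fdVU: "fdim V U" using fdim_sub[OF lsm_ksub[OF V] lsm_ksub[OF U] fdU UV VR] .
      have q: "?q \<in> cfs smult G" using ann_cfs[OF spV fdVU] .
      have qn0: "?q \<noteq> n0"
      proof
        assume "?q = n0"
        hence "\<forall>g\<in>n0. \<forall>y\<in>V. g * y \<in> U" by blast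
        thus False using Hy[OF spV subset_refl VR] by blast
      qed
      have qc': "\<forall>m\<in>cfs smult G. \<forall>n\<in>cfs smult G. m \<noteq> n \<longrightarrow> ext1_vanishes smult G m n"
        using qc unfolding quasicommutative_def .
      have ev: "ext1_vanishes smult G ?q n0" using mp[OF bspec[OF bspec[OF qc' q] n0] qn0] .
      have fdVN: "fdim V N'"
        using fdim_sub[OF lsm_ksub[OF V] lsm_ksub[OF N'] fd] N'U UV VR by blast
      have qG: "?q \<subseteq> G" by blast
      have qV: "\<forall>g\<in>?q. \<forall>v\<in>V. g * v \<in> U" by blast
      obtain C1 where C1: "lsm C1" "N' \<subseteq> C1" "C1 \<subseteq> V" "C1 \<inter> U = N'" "\<forall>v\<in>V. \<exists>u\<in>U. \<exists>c\<in>C1. v = u + c"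
        using ext_split[OF ev qG cfs_G[OF n0] sp spV n0U qV fdVN] by blast
      have spC1: "simple_pair C1 V" unfolding simple_pair_def
      proof (intro conjI allI impI)
        show "lsm C1" "lsm V" "C1 \<subseteq> V" using C1 V by auto
        show "C1 \<noteq> V"
        proof
          assume "C1 = V" hence "U \<subseteq> C1" using UV by blast
          hence "U = N'" using C1(4) by blast
          thus False using N'nU by simp
        qed
        fix W assume W: "lsm W \<and> C1 \<subseteq> W \<and> W \<subseteq> V"
        have WL: "lsm (W \<inter> U)" using lsm_Int[of W U] W U by blast
        have "N' \<subseteq> W \<inter> U" using W C1(2) N'U by blast
        hence "W \<inter> U = N' \<or> W \<inter> U = U" using simple_pairD[OF sp WL] by blast
        thus "W = C1 \<or> W = V"
        proof
          assume WU: "W \<inter> U = N'"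
          have "W \<subseteq> C1"
          proof
            fix w assume w: "w \<in> W"
            then obtain u c where uc: "u \<in> U" "c \<in> C1" "w = u + c" using C1(5) W by blast
            have "u = w - c" using uc by simp
            hence "u \<in> W" using lsm_diff[of W w c] W w uc(2) by blast
            hence "u \<in> C1" using WU uc(1) C1(2) by blast
            thus "w \<in> C1" using uc lsm_add[OF C1(1)] by blast
          qed
          thus ?thesis using W by blast
        next
          assume WU: "W \<inter> U = U"
          have "V \<subseteq> W"
          proof
            fix v assume "v \<in> V"
            then obtain u c where uc: "u \<in> U" "c \<in> C1" "v = u + c" using C1(5) by blast
            thus "v \<in> W" using WU W lsm_add[of W u c] by blast
          qed
          thus ?thesis using W by blast
        qed
      qed
      have n0V: "\<forall>g\<in>n0. \<forall>v\<in>V. g * v \<in> C1"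
      proof (intro ballI)
        fix g v assume g: "g \<in> n0" and "v \<in> V"
        then obtain u c where uc: "u \<in> U" "c \<in> C1" "v = u + c" using C1(5) by blast
        have "g * u \<in> C1" using n0U g uc C1(2) by blast
        moreover have "g * c \<in> C1" using lsm_mul[OF C1(1) _ uc(2)] g cfs_G[OF n0] by blast
        ultimately show "g * v \<in> C1" using lsm_add[OF C1(1)] uc by (simp add: distrib_left)
      qed
      have lt: "qd R V < d"
        using qd_drop[OF lsm_ksub[OF V] lsm_ksub[OF U] fdU UV VR] UnV UV d by blast
      have fdC1: "fdim R C1" using fdim_mono[OF lsm_ksub[OF C1(1)] fd C1(2)] .
      have Hy': "\<forall>X Y. simple_pair X Y \<and> V \<subseteq> X \<and> Y \<subseteq> R \<longrightarrow> \<not> (\<forall>g\<in>n0. \<forall>y\<in>Y. g * y \<in> X)"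
      proof (intro allI impI)
        fix X Y assume "simple_pair X Y \<and> V \<subseteq> X \<and> Y \<subseteq> R"
        thus "\<not> (\<forall>g\<in>n0. \<forall>y\<in>Y. g * y \<in> X)" using Hy[of X Y] UV by blast
      qed
      have pre: "qd R V = qd R V \<and> simple_pair C1 V \<and> (\<forall>g\<in>n0. \<forall>u\<in>V. g * u \<in> C1) \<and> V \<subseteq> R \<and> fdim R C1 \<and>
        (\<forall>X Y. simple_pair X Y \<and> V \<subseteq> X \<and> Y \<subseteq> R \<longrightarrow> \<not> (\<forall>g\<in>n0. \<forall>y\<in>Y. g * y \<in> X))"
        using spC1 n0V VR fdC1 Hy' by (intro conjI refl)
      have "\<exists>C. lsm C \<and> C1 \<subseteq> C \<and> C \<subseteq> R \<and> C \<inter> V = C1 \<and> (\<forall>v\<in>R. \<exists>u\<in>V. \<exists>c\<in>C. v = u + c)"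
        by (rule mp[OF spec[OF spec[OF less.IH[OF lt], of C1], of V] pre])
      then obtain C where C: "lsm C" "C1 \<subseteq> C" "C \<subseteq> R" "C \<inter> V = C1" "\<forall>v\<in>R. \<exists>u\<in>V. \<exists>c\<in>C. v = u + c"
        by blast
      have "C \<inter> U = N'" using C(2,4) C1(2,4) UV N'U by blast
      moreover have "\<forall>v\<in>R. \<exists>u\<in>U. \<exists>c\<in>C. v = u + c"
      proof
        fix v assume "v \<in> R"
        then obtain w c where wc: "w \<in> V" "c \<in> C" "v = w + c" using C(5) by blast
        then obtain u c1 where uc: "u \<in> U" "c1 \<in> C1" "w = u + c1" using C1(5) by blast
        have "c1 + c \<in> C" using lsm_add[OF C(1)] uc(2) wc(2) C(2) by blast
        moreover have "v = u + (c1 + c)" using wc uc by (simp add: add.assoc)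
        ultimately show "\<exists>u\<in>U. \<exists>c\<in>C. v = u + c" using uc(1) by blast
      qed
      moreover have "N' \<subseteq> C" using C(2) C1(2) by blast
      ultimately show ?thesis using C(1,3) by (intro exI[of _ C] conjI) auto
    qed
  qed
qed

lemma gpart_lsm: assumes n: "tsi n" and W: "lsm W" shows "lsm (gpart G W n)"
  unfolding left_submod_def gpart_def
proof (intro conjI ballI)
  show "0 \<in> {x. \<exists>j. \<forall>g\<in>ipow n j. g * x \<in> W}" using lsm_0[OF W] by simp
  fix a b assume "a \<in> {x. \<exists>j. \<forall>g\<in>ipow n j. g * x \<in> W}" "b \<in> {x. \<exists>j. \<forall>g\<in>ipow n j. g * x \<in> W}"
  then obtain j1 j2 where j: "\<forall>g\<in>ipow n j1. g * a \<in> W" "\<forall>g\<in>ipow n j2. g * b \<in> W" by blast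
  have "\<forall>g\<in>ipow n (max j1 j2). g * (a + b) \<in> W"
  proof
    fix g assume "g \<in> ipow n (max j1 j2)"
    hence "g \<in> ipow n j1" "g \<in> ipow n j2" using ipow_dec[OF n] by (metis max.cobounded1 max.cobounded2 subsetD)+
    thus "g * (a + b) \<in> W" using j lsm_add[OF W] by (simp add: distrib_left)
  qed
  thus "a + b \<in> {x. \<exists>j. \<forall>g\<in>ipow n j. g * x \<in> W}" by blast
next
  fix h a assume h: "h \<in> G" and "a \<in> {x. \<exists>j. \<forall>g\<in>ipow n j. g * x \<in> W}"
  then obtain j where j: "\<forall>g\<in>ipow n j. g * a \<in> W" by blast
  have "\<forall>g\<in>ipow n j. g * (h * a) \<in> W"
  proof
    fix g assume "g \<in> ipow n j"
    hence "g * h \<in> ipow n j" using tsi_mr[OF ipow_tsi[OF n] h] by blast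
    thus "g * (h * a) \<in> W" using j by (simp add: mult.assoc[symmetric])
  qed
  thus "h * a \<in> {x. \<exists>j. \<forall>g\<in>ipow n j. g * x \<in> W}" by blast
qed

lemma sub_gpart: assumes W: "lsm W" shows "W \<subseteq> gpart G W n"
proof
  fix x assume "x \<in> W"
  hence "\<forall>g\<in>ipow n 0. g * x \<in> W" using lsm_mul[OF W] by simp
  thus "x \<in> gpart G W n" unfolding gpart_def by blast
qed

lemma gpart_step:
  assumes n: "tsi n" and W: "lsm W" and x: "x \<in> gpart G U n" and nU: "\<forall>g\<in>n. \<forall>u\<in>U. g * u \<in> W"
  shows "x \<in> gpart G W n"
proof -
  obtain j where j: "\<forall>g\<in>ipow n j. g * x \<in> U" using x unfolding gpart_def by blast
  have "\<forall>g\<in>ipow n (Suc j). g * x \<in> W"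
  proof
    fix g assume "g \<in> ipow n (Suc j)"
    hence g: "g \<in> setmul n (ipow n j)" by simp
    show "g * x \<in> W"
    proof (rule setmul_apply[OF W _ g])
      fix a b assume "a \<in> n" "b \<in> ipow n j"
      thus "a * (b * x) \<in> W" using j nU by blast
    qed
  qed
  thus ?thesis unfolding gpart_def by blast
qed

end


context hc
begin

lemma decomp:
  assumes qc: "quasicommutative smult G" and N: "lsm N"
  shows "\<forall>N'. qd N N' = d \<and> lsm N' \<and> N' \<subseteq> N \<and> fdim N N' \<longrightarrow>
     (\<forall>x\<in>N. \<exists>F y. finite F \<and> F \<subseteq> cfs smult G \<and> (\<forall>n\<in>F. y n \<in> N \<and> y n \<in> gpart G N' n) \<and> x - sum y F \<in> N')"
proof (induction d rule: less_induct)
  case (less d)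
  show ?case
  proof (intro allI impI)
    fix N' assume H: "qd N N' = d \<and> lsm N' \<and> N' \<subseteq> N \<and> fdim N N'"
    have d: "qd N N' = d" and N': "lsm N'" and N'N: "N' \<subseteq> N" and fd: "fdim N N'" using H by auto
    show "\<forall>x\<in>N. \<exists>F y. finite F \<and> F \<subseteq> cfs smult G \<and> (\<forall>n\<in>F. y n \<in> N \<and> y n \<in> gpart G N' n) \<and> x - sum y F \<in> N'"
    proof (cases "N \<subseteq> N'")
      case True
      show ?thesis
      proof
        fix x assume "x \<in> N"
        hence "x - sum (\<lambda>_. 0) {} \<in> N'" using True by auto
        thus "\<exists>F y. finite F \<and> F \<subseteq> cfs smult G \<and> (\<forall>n\<in>F. y n \<in> N \<and> y n \<in> gpart G N' n) \<and> x - sum y F \<in> N'"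
          by (intro exI[of _ "{}"] exI[of _ "\<lambda>_. 0"]) simp
      qed
    next
      case False
      obtain U where sp: "simple_pair N' U" and UN: "U \<subseteq> N"
        using exists_simple_above[OF N' N N'N False fd] by blast
      have U: "lsm U" and N'U: "N' \<subseteq> U" and N'nU: "N' \<noteq> U" using sp unfolding simple_pair_def by auto
      define n0 where "n0 = {g \<in> G. \<forall>u\<in>U. g * u \<in> N'}"
      have fdU: "fdim U N'" using fdim_sub[OF lsm_ksub[OF U] lsm_ksub[OF N'] fd N'U UN] .
      have n0: "n0 \<in> cfs smult G" unfolding n0_def using ann_cfs[OF sp fdU] .
      have tn0: "tsi n0" using max_tsi[OF cfs_max[OF n0]] .
      have n0U: "\<forall>g\<in>n0. \<forall>u\<in>U. g * u \<in> N'" unfolding n0_def by blast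
      have lt: "qd N U < d" using qd_drop[OF lsm_ksub[OF U] lsm_ksub[OF N'] fd N'U UN] N'U N'nU d by blast
      have fdNU: "fdim N U" using fdim_mono[OF lsm_ksub[OF U] fd N'U] .
      have preI: "qd N U = qd N U \<and> lsm U \<and> U \<subseteq> N \<and> fdim N U" using U UN fdNU by (intro conjI refl)
      have IH: "\<forall>x\<in>N. \<exists>F y. finite F \<and> F \<subseteq> cfs smult G \<and> (\<forall>n\<in>F. y n \<in> N \<and> y n \<in> gpart G U n) \<and> x - sum y F \<in> U"
        by (rule mp[OF spec[OF less.IH[OF lt], of U] preI])
      show ?thesis
      proof
        fix x assume x: "x \<in> N"
        obtain F y where F: "finite F" "F \<subseteq> cfs smult G" "\<forall>n\<in>F. y n \<in> N \<and> y n \<in> gpart G U n" "x - sum y F \<in> U"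
          using bspec[OF IH x] by (elim exE conjE) (rule that; assumption)
        have cex: "\<exists>c. c \<in> N \<and> y n - c \<in> U \<and> c \<in> gpart G N' n" if n: "n \<in> F - {n0}" for n
        proof -
          have ncfs: "n \<in> cfs smult G" using n F(2) by blast
          have nn0: "n \<noteq> n0" using n by blast
          have tn: "tsi n" using max_tsi[OF cfs_max[OF ncfs]] .
          let ?R = "N \<inter> gpart G U n"
          have R: "lsm ?R" using lsm_Int[OF N gpart_lsm[OF tn U]] .
          have UR: "U \<subseteq> ?R" using UN sub_gpart[OF U] by blast
          have yR: "y n \<in> ?R" using F(3) n by blast
          have fdR: "fdim ?R N'" using fdim_sub[OF lsm_ksub[OF R] lsm_ksub[OF N'] fd] N'U UR by blast
          have Hy: "\<forall>X Y. simple_pair X Y \<and> U \<subseteq> X \<and> Y \<subseteq> ?R \<longrightarrow> \<not> (\<forall>g\<in>n0. \<forall>y\<in>Y. g * y \<in> X)"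
          proof (intro allI impI notI)
            fix X Y assume XY: "simple_pair X Y \<and> U \<subseteq> X \<and> Y \<subseteq> ?R" and all: "\<forall>g\<in>n0. \<forall>y\<in>Y. g * y \<in> X"
            have X: "lsm X" and XsY: "X \<subseteq> Y" and XnY: "X \<noteq> Y" using XY unfolding simple_pair_def by auto
            have "Y \<subseteq> X"
            proof
              fix v assume v: "v \<in> Y"
              then obtain j where j: "\<forall>g\<in>ipow n j. g * v \<in> U" using XY unfolding gpart_def by blast
              obtain e where e: "e \<in> ipow n j" "1 - e \<in> ipow n0 (Suc 0)"
                using comax[OF cfs_max[OF ncfs] cfs_max[OF n0] nn0] by blast
              have "1 - e \<in> n0" using e(2) ipow_1[OF tn0] by simp
              hence a: "(1 - e) * v \<in> X" using all v by blast
              have "e * v \<in> X" using j e(1) XY by blast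
              hence "e * v + (1 - e) * v \<in> X" using lsm_add[OF X] a by blast
              thus "v \<in> X" by (simp add: algebra_simps)
            qed
            thus False using XsY XnY by blast
          qed
          have pre: "qd ?R U = qd ?R U \<and> simple_pair N' U \<and> (\<forall>g\<in>n0. \<forall>u\<in>U. g * u \<in> N') \<and> U \<subseteq> ?R \<and> fdim ?R N' \<and>
              (\<forall>X Y. simple_pair X Y \<and> U \<subseteq> X \<and> Y \<subseteq> ?R \<longrightarrow> \<not> (\<forall>g\<in>n0. \<forall>y\<in>Y. g * y \<in> X))"
            using sp n0U UR fdR Hy by (intro conjI refl)
          obtain C where C: "lsm C" "N' \<subseteq> C" "C \<subseteq> ?R" "C \<inter> U = N'" "\<forall>v\<in>?R. \<exists>u\<in>U. \<exists>c\<in>C. v = u + c"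
            using mp[OF spec[OF spec[OF split_bottom[OF qc n0 R, of "qd ?R U"], of N'], of U] pre] by blast
          obtain u c where uc: "u \<in> U" "c \<in> C" "y n = u + c" using C(5) yR by blast
          have cN: "c \<in> N" using uc C(3) by blast
          have yc: "y n - c \<in> U" using uc by simp
          obtain j where j: "\<forall>g\<in>ipow n j. g * y n \<in> U" using F(3) n unfolding gpart_def by blast
          have "\<forall>g\<in>ipow n j. g * c \<in> N'"
          proof
            fix g assume g: "g \<in> ipow n j"
            have gG: "g \<in> G" using g tsi_sub[OF ipow_tsi[OF tn]] by blast
            have "g * c = g * y n - g * u" using uc by (simp add: algebra_simps)
            moreover have "g * u \<in> U" using lsm_mul[OF U gG uc(1)] .
            ultimately have "g * c \<in> U" using lsm_diff[OF U] j g by simp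
            moreover have "g * c \<in> C" using lsm_mul[OF C(1) gG uc(2)] .
            ultimately show "g * c \<in> N'" using C(4) by blast
          qed
          hence "c \<in> gpart G N' n" unfolding gpart_def by blast
          thus ?thesis using cN yc by blast
        qed
        have "\<forall>n\<in>F - {n0}. \<exists>c. c \<in> N \<and> y n - c \<in> U \<and> c \<in> gpart G N' n" by (rule ballI) (rule cex)
        then obtain cc where cc: "\<forall>n\<in>F - {n0}. cc n \<in> N \<and> y n - cc n \<in> U \<and> cc n \<in> gpart G N' n"
          by (rule bchoice[elim_format]) blast
        define y' where "y' n = (if n = n0 then x - (\<Sum>n'\<in>F - {n0}. cc n') else cc n)" for n
        let ?F' = "insert n0 F"
        have GP: "lsm (gpart G U n0)" using gpart_lsm[OF tn0 U] .
        have UGP: "U \<subseteq> gpart G U n0" using sub_gpart[OF U] .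
        have eq: "y' n0 = (x - sum y F) + (if n0 \<in> F then y n0 else 0) + (\<Sum>n\<in>F - {n0}. y n - cc n)"
        proof -
          have "sum y F = (if n0 \<in> F then y n0 else 0) + sum y (F - {n0})"
            using F(1) by (cases "n0 \<in> F") (simp_all add: sum.remove)
          thus ?thesis unfolding y'_def by (simp add: sum_subtractf algebra_simps)
        qed
        have "y' n0 \<in> gpart G U n0"
        proof -
          have a: "x - sum y F \<in> gpart G U n0" using F(4) UGP by blast
          have b: "(if n0 \<in> F then y n0 else 0) \<in> gpart G U n0" using F(3) lsm_0[OF GP] by auto
          have c: "(\<Sum>n\<in>F - {n0}. y n - cc n) \<in> gpart G U n0"
            by (rule lsm_sum[OF GP]) (use cc UGP in blast)
          show ?thesis unfolding eq using lsm_add[OF GP lsm_add[OF GP a b] c] .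
        qed
        hence gp0: "y' n0 \<in> gpart G N' n0" using gpart_step[OF tn0 N' _ n0U] by blast
        have yN0: "y' n0 \<in> N"
        proof -
          have "(\<Sum>n'\<in>F - {n0}. cc n') \<in> N" by (rule lsm_sum[OF N]) (use cc in blast)
          thus ?thesis unfolding y'_def using lsm_diff[OF N x] by simp
        qed
        have props: "\<forall>n\<in>?F'. y' n \<in> N \<and> y' n \<in> gpart G N' n"
        proof
          fix n assume n: "n \<in> ?F'"
          show "y' n \<in> N \<and> y' n \<in> gpart G N' n"
          proof (cases "n = n0")
            case True thus ?thesis using yN0 gp0 by simp
          next
            case False
            hence "n \<in> F - {n0}" using n by blast
            thus ?thesis using cc False unfolding y'_def by simp
          qed
        qed
        have "sum y' ?F' = y' n0 + sum y' (F - {n0})" using sum.insert_remove[OF F(1)] .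
        also have "sum y' (F - {n0}) = sum cc (F - {n0})" unfolding y'_def by (rule sum.cong) auto
        finally have "x - sum y' ?F' = 0" unfolding y'_def by simp
        hence "x - sum y' ?F' \<in> N'" using lsm_0[OF N'] by simp
        moreover have "finite ?F'" "?F' \<subseteq> cfs smult G" using F(1,2) n0 by auto
        ultimately show "\<exists>F y. finite F \<and> F \<subseteq> cfs smult G \<and> (\<forall>n\<in>F. y n \<in> N \<and> y n \<in> gpart G N' n) \<and> x - sum y F \<in> N'"
          using props by blast
      qed
    qed
  qed
qed

lemma block_indep:
  assumes L: "lsm L" and F: "finite F" "F \<subseteq> cfs smult G" and y: "\<forall>n\<in>F. y n \<in> gpart G L n"
    and s: "sum y F \<in> L"
  shows "\<forall>n\<in>F. y n \<in> L"
proof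
  fix n0 assume n0: "n0 \<in> F"
  have "\<forall>n\<in>F. \<exists>j. \<forall>g\<in>ipow n j. g * y n \<in> L" using y unfolding gpart_def by blast
  then obtain jj where jj: "\<forall>n\<in>F. \<forall>g\<in>ipow n (jj n). g * y n \<in> L" by (rule bchoice[elim_format]) blast
  have mx: "maximal_ideal G n0" using F(2) n0 cfs_max by blast
  have "\<forall>n\<in>F - {n0}. maximal_ideal G n \<and> n \<noteq> n0" using F(2) cfs_max by blast
  then obtain i where i: "i \<in> G" "\<forall>n\<in>F - {n0}. i \<in> ipow n (jj n)" "1 - i \<in> ipow n0 (jj n0)"
    using crt[where F="F - {n0}" and p=n0 and j=jj and b="jj n0"] F(1) mx by blast
  have oi: "1 - i \<in> G" using Gdiff[OF G1 i(1)] .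
  have a: "(1 - i) * y n0 \<in> L" using jj n0 i(3) by blast
  have "sum y F = y n0 + sum y (F - {n0})" using sum.remove[OF F(1) n0] .
  hence "i * y n0 = i * sum y F - (\<Sum>n\<in>F - {n0}. i * y n)" by (simp add: algebra_simps sum_distrib_left)
  moreover have "i * sum y F \<in> L" using lsm_mul[OF L i(1) s] .
  moreover have "(\<Sum>n\<in>F - {n0}. i * y n) \<in> L" by (rule lsm_sum[OF L]) (use jj i(2) in blast)
  ultimately have b: "i * y n0 \<in> L" using lsm_diff[OF L] by simp
  have "i * y n0 + (1 - i) * y n0 \<in> L" using lsm_add[OF L b a] .
  thus "y n0 \<in> L" by (simp add: algebra_simps)
qed

lemma cfs_fc: "n \<in> cfs smult G \<Longrightarrow> fin_codim smult G n" unfolding cfs_def by blast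

lemma block_exist:
  assumes noeth: "noetherian G" and qc: "quasicommutative smult G" and qcen: "quasicentral G"
    and m: "m \<in> cfs smult G"
  shows "\<exists>F y. finite F \<and> F \<subseteq> cfs smult G \<and> (\<forall>n\<in>F. y n \<in> gpart G (Aideal G m k) n) \<and>
           x - sum y F \<in> Aideal G m k"
proof -
  let ?L = "setmul UNIV (ipow m k)"
  let ?N = "ssum (dbl G x G) ?L"
  have L: "lsm ?L" by (rule lsm_sU)
  have N: "lsm ?N" using ssum_lsm[OF lsm_dbl L] .
  have fd: "fdim ?N ?L" using fdim_dbl[OF noeth qcen max_tsi[OF cfs_max[OF m]] cfs_fc[OF m]] .
  have LN: "?L \<subseteq> ?N" using ssum_right[OF lsm_0[OF lsm_dbl]] .
  have "x + 0 \<in> ?N" by (rule ssum_I[OF dbl_mem lsm_0[OF L]])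
  hence xN: "x \<in> ?N" by simp
  have pre: "qd ?N ?L = qd ?N ?L \<and> lsm ?L \<and> ?L \<subseteq> ?N \<and> fdim ?N ?L" using L LN fd by (intro conjI refl)
  have "\<exists>F y. finite F \<and> F \<subseteq> cfs smult G \<and> (\<forall>n\<in>F. y n \<in> ?N \<and> y n \<in> gpart G ?L n) \<and> x - sum y F \<in> ?L"
    using bspec[OF mp[OF spec[OF decomp[OF qc N, of "qd ?N ?L"], of ?L] pre] xN] .
  thus ?thesis unfolding Aideal_def by blast
qed

lemma HC_block:
  assumes noeth: "noetherian G" and qc: "quasicommutative smult G" and qcen: "quasicentral G"
  shows "HC_block_subalgebra smult G"
  unfolding HC_block_subalgebra_def
proof (intro ballI allI)
  fix m k assume m: "m \<in> cfs smult G"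
  show "block_quot smult G (Aideal G m k)" unfolding block_quot_def
  proof (intro conjI allI impI)
    fix x
    show "\<exists>F y. finite F \<and> F \<subseteq> cfs smult G \<and> (\<forall>n\<in>F. y n \<in> gpart G (Aideal G m k) n) \<and>
           x - sum y F \<in> Aideal G m k" using block_exist[OF noeth qc qcen m] .
  next
    fix F y assume H: "finite F \<and> F \<subseteq> cfs smult G \<and> (\<forall>n\<in>F. y n \<in> gpart G (Aideal G m k) n) \<and> sum y F \<in> Aideal G m k"
    have L: "lsm (Aideal G m k)" unfolding Aideal_def by (rule lsm_sU)
    show "\<forall>n\<in>F. y n \<in> Aideal G m k" using block_indep[OF L] H by blast
  qed
qed

end


context hc
begin

definition npair :: "'a set \<Rightarrow> 'a set \<Rightarrow> 'a set \<Rightarrow> bool" where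
  "npair n X1 X2 \<longleftrightarrow> simple_pair X1 X2 \<and> (\<forall>g\<in>n. \<forall>x\<in>X2. g * x \<in> X1)"

lemma npair_T1:
  assumes np: "npair n X1 X2" and nG: "n \<subseteq> G" and Z: "lsm Z" and int: "X2 \<inter> Z \<subseteq> X1"
  shows "npair n (ssum X1 Z) (ssum X2 Z)"
proof -
  have sp: "simple_pair X1 X2" and nX: "\<forall>g\<in>n. \<forall>x\<in>X2. g * x \<in> X1" using np unfolding npair_def by auto
  have X1: "lsm X1" and X2: "lsm X2" and X12: "X1 \<subseteq> X2" and Xne: "X1 \<noteq> X2" using sp unfolding simple_pair_def by auto
  have L1: "lsm (ssum X1 Z)" and L2: "lsm (ssum X2 Z)" using ssum_lsm X1 X2 Z by auto
  have S12: "ssum X1 Z \<subseteq> ssum X2 Z" using X12 unfolding ssum_def by blast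
  have ne: "ssum X1 Z \<noteq> ssum X2 Z"
  proof
    assume eq: "ssum X1 Z = ssum X2 Z"
    obtain x2 where x2: "x2 \<in> X2" "x2 \<notin> X1" using X12 Xne by blast
    have "x2 + 0 \<in> ssum X2 Z" using ssum_I[OF x2(1) lsm_0[OF Z]] .
    hence "x2 \<in> ssum X1 Z" using eq by simp
    then obtain x1 z where xz: "x1 \<in> X1" "z \<in> Z" "x2 = x1 + z" by (rule ssum_E)
    have "z = x2 - x1" using xz by simp
    hence "z \<in> X2" using lsm_diff[OF X2 x2(1)] xz X12 by blast
    hence "z \<in> X1" using int xz by blast
    hence "x1 + z \<in> X1" using lsm_add[OF X1 xz(1)] by blast
    thus False using xz x2 by simp
  qed
  have simp: "\<forall>W. lsm W \<and> ssum X1 Z \<subseteq> W \<and> W \<subseteq> ssum X2 Z \<longrightarrow> W = ssum X1 Z \<or> W = ssum X2 Z"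
  proof (intro allI impI)
    fix W assume W: "lsm W \<and> ssum X1 Z \<subseteq> W \<and> W \<subseteq> ssum X2 Z"
    have X1W: "X1 \<subseteq> W" using W ssum_left[OF lsm_0[OF Z], of X1] by blast
    have ZW: "Z \<subseteq> W" using W ssum_right[OF lsm_0[OF X1], of Z] by blast
    have WL: "lsm (W \<inter> X2)" using lsm_Int W X2 by blast
    have "W \<inter> X2 = X1 \<or> W \<inter> X2 = X2" using simple_pairD[OF sp WL] X1W X12 by blast
    thus "W = ssum X1 Z \<or> W = ssum X2 Z"
    proof
      assume a: "W \<inter> X2 = X1"
      have "W \<subseteq> ssum X1 Z"
      proof
        fix w assume w: "w \<in> W"
        hence "w \<in> ssum X2 Z" using W by blast
        then obtain x2 z where xz: "x2 \<in> X2" "z \<in> Z" "w = x2 + z" by (rule ssum_E)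
        have "x2 = w - z" using xz by simp
        hence "x2 \<in> W" using lsm_diff[of W w z] W w xz ZW by blast
        hence "x2 \<in> X1" using a xz by blast
        thus "w \<in> ssum X1 Z" using ssum_I xz by blast
      qed
      thus ?thesis using W by blast
    next
      assume a: "W \<inter> X2 = X2"
      hence "ssum X2 Z \<subseteq> W" using ssum_sub[of W X2 Z] W ZW by blast
      thus ?thesis using W by blast
    qed
  qed
  have ann: "\<forall>g\<in>n. \<forall>x\<in>ssum X2 Z. g * x \<in> ssum X1 Z"
  proof (intro ballI)
    fix g x assume g: "g \<in> n" and x: "x \<in> ssum X2 Z"
    from x obtain x2 z where xz: "x2 \<in> X2" "z \<in> Z" "x = x2 + z" by (rule ssum_E)
    have "g * x2 + g * z \<in> ssum X1 Z" using ssum_I nX g xz lsm_mul[OF Z _ xz(2)] nG by blast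
    thus "g * x \<in> ssum X1 Z" using xz by (simp add: distrib_left)
  qed
  show ?thesis unfolding npair_def simple_pair_def using L1 L2 S12 ne simp ann by blast
qed

lemma npair_T2:
  assumes np: "npair n X1 X2" and nG: "n \<subseteq> G" and Z: "lsm Z" and cov: "X2 \<subseteq> ssum X1 (X2 \<inter> Z)"
  shows "npair n (X1 \<inter> Z) (X2 \<inter> Z)"
proof -
  have sp: "simple_pair X1 X2" and nX: "\<forall>g\<in>n. \<forall>x\<in>X2. g * x \<in> X1" using np unfolding npair_def by auto
  have X1: "lsm X1" and X2: "lsm X2" and X12: "X1 \<subseteq> X2" and Xne: "X1 \<noteq> X2" using sp unfolding simple_pair_def by auto
  have L1: "lsm (X1 \<inter> Z)" and L2: "lsm (X2 \<inter> Z)" using lsm_Int X1 X2 Z by auto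
  have S12: "X1 \<inter> Z \<subseteq> X2 \<inter> Z" using X12 by blast
  have ne: "X1 \<inter> Z \<noteq> X2 \<inter> Z"
  proof
    assume eq: "X1 \<inter> Z = X2 \<inter> Z"
    have "X2 \<subseteq> X1"
    proof
      fix x assume "x \<in> X2"
      hence "x \<in> ssum X1 (X2 \<inter> Z)" using cov by blast
      then obtain a b where ab: "a \<in> X1" "b \<in> X2 \<inter> Z" "x = a + b" by (rule ssum_E)
      hence "b \<in> X1" using eq by blast
      thus "x \<in> X1" using ab lsm_add[OF X1] by blast
    qed
    thus False using X12 Xne by blast
  qed
  have simp: "\<forall>W. lsm W \<and> X1 \<inter> Z \<subseteq> W \<and> W \<subseteq> X2 \<inter> Z \<longrightarrow> W = X1 \<inter> Z \<or> W = X2 \<inter> Z"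
  proof (intro allI impI)
    fix W assume W: "lsm W \<and> X1 \<inter> Z \<subseteq> W \<and> W \<subseteq> X2 \<inter> Z"
    have WL: "lsm (ssum X1 W)" using ssum_lsm X1 W by blast
    have "X1 \<subseteq> ssum X1 W" using ssum_left[OF lsm_0, of W X1] W by blast
    moreover have "ssum X1 W \<subseteq> X2" using ssum_sub[OF X2] X12 W by blast
    ultimately have "ssum X1 W = X1 \<or> ssum X1 W = X2" using simple_pairD[OF sp WL] by blast
    thus "W = X1 \<inter> Z \<or> W = X2 \<inter> Z"
    proof
      assume "ssum X1 W = X1"
      hence "W \<subseteq> X1" using ssum_right[OF lsm_0[OF X1], of W] by blast
      thus ?thesis using W by blast
    next
      assume a: "ssum X1 W = X2"
      have "X2 \<inter> Z \<subseteq> W"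
      proof
        fix v assume v: "v \<in> X2 \<inter> Z"
        hence "v \<in> ssum X1 W" using a by blast
        then obtain x w where xw: "x \<in> X1" "w \<in> W" "v = x + w" by (rule ssum_E)
        have "x = v - w" using xw by simp
        hence "x \<in> Z" using lsm_diff[OF Z] v xw W by blast
        hence "x \<in> W" using xw W by blast
        thus "v \<in> W" using xw lsm_add[of W x w] W by blast
      qed
      thus ?thesis using W by blast
    qed
  qed
  have ann: "\<forall>g\<in>n. \<forall>x\<in>X2 \<inter> Z. g * x \<in> X1 \<inter> Z" using nX lsm_mul[OF Z] nG by blast
  show ?thesis unfolding npair_def simple_pair_def using L1 L2 S12 ne simp ann by blast
qed

lemma npair_sum:
  assumes np: "npair n X1 X2" and nG: "n \<subseteq> G" and M1: "lsm M1" and M2: "lsm M2"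
    and B1: "B \<subseteq> X1" and BM1: "B \<subseteq> M1" and BM2: "B \<subseteq> M2" and cov: "X2 \<subseteq> ssum M1 M2"
  shows "(\<exists>Y1 Y2. npair n Y1 Y2 \<and> B \<subseteq> Y1 \<and> Y2 \<subseteq> M1) \<or> (\<exists>Y1 Y2. npair n Y1 Y2 \<and> B \<subseteq> Y1 \<and> Y2 \<subseteq> M2)"
proof -
  have sp: "simple_pair X1 X2" using np unfolding npair_def by auto
  have X1: "lsm X1" and X2: "lsm X2" and X12: "X1 \<subseteq> X2" and Xne: "X1 \<noteq> X2" using sp unfolding simple_pair_def by auto
  show ?thesis
  proof (cases "X2 \<subseteq> ssum X1 (X2 \<inter> M1)")
    case True
    have "npair n (X1 \<inter> M1) (X2 \<inter> M1)" using npair_T2[OF np nG M1 True] .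
    moreover have "B \<subseteq> X1 \<inter> M1" using B1 BM1 by blast
    ultimately show ?thesis by blast
  next
    case False
    have WL: "lsm (ssum X1 (X2 \<inter> M1))" using ssum_lsm X1 lsm_Int[OF X2 M1] by blast
    have "X1 \<subseteq> ssum X1 (X2 \<inter> M1)" using ssum_left[OF lsm_0[OF lsm_Int[OF X2 M1]]] .
    moreover have "ssum X1 (X2 \<inter> M1) \<subseteq> X2" using ssum_sub[OF X2] X12 by blast
    ultimately have "ssum X1 (X2 \<inter> M1) = X1" using simple_pairD[OF sp WL] False by blast
    hence int: "X2 \<inter> M1 \<subseteq> X1" using ssum_right[OF lsm_0[OF X1], of "X2 \<inter> M1"] by blast
    have np1: "npair n (ssum X1 M1) (ssum X2 M1)" using npair_T1[OF np nG M1 int] .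
    have cov2: "ssum X2 M1 \<subseteq> ssum (ssum X1 M1) (ssum X2 M1 \<inter> M2)"
    proof
      fix v assume "v \<in> ssum X2 M1"
      then obtain x2 m1 where xm: "x2 \<in> X2" "m1 \<in> M1" "v = x2 + m1" by (rule ssum_E)
      have "x2 \<in> ssum M1 M2" using cov xm by blast
      then obtain a b where ab: "a \<in> M1" "b \<in> M2" "x2 = a + b" by (rule ssum_E)
      have "b = x2 + (- a)" using ab by simp
      hence "b \<in> ssum X2 M1" using ssum_I[OF xm(1) lsm_neg[OF M1 ab(1)]] by simp
      hence b2: "b \<in> ssum X2 M1 \<inter> M2" using ab by blast
      have "0 + (a + m1) \<in> ssum X1 M1" using ssum_I[OF lsm_0[OF X1] lsm_add[OF M1 ab(1) xm(2)]] .
      hence "(0 + (a + m1)) + b \<in> ssum (ssum X1 M1) (ssum X2 M1 \<inter> M2)" using ssum_I b2 by blast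
      moreover have "(0 + (a + m1)) + b = v" using xm ab by (simp add: algebra_simps)
      ultimately show "v \<in> ssum (ssum X1 M1) (ssum X2 M1 \<inter> M2)" by simp
    qed
    have "npair n (ssum X1 M1 \<inter> M2) (ssum X2 M1 \<inter> M2)" using npair_T2[OF np1 nG M2 cov2] .
    moreover have "B \<subseteq> ssum X1 M1 \<inter> M2" using B1 BM2 ssum_left[OF lsm_0[OF M1], of X1] by blast
    ultimately show ?thesis by blast
  qed
qed

end


context hc
begin

lemma npair_iter:
  assumes nG: "n \<subseteq> G" and B: "lsm B" and M: "\<And>i. lsm (M i)" "\<And>i. B \<subseteq> M i"
    and Ms0: "Ms 0 = B" and MsS: "\<And>i. Ms (Suc i) = ssum (Ms i) (M i)"
  shows "\<forall>X1 X2. npair n X1 X2 \<and> B \<subseteq> X1 \<and> X2 \<subseteq> Ms r \<longrightarrow> (\<exists>i<r. \<exists>Y1 Y2. npair n Y1 Y2 \<and> B \<subseteq> Y1 \<and> Y2 \<subseteq> M i)"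
proof -
  have MsL: "lsm (Ms i) \<and> B \<subseteq> Ms i" for i
  proof (induction i)
    case 0 thus ?case using Ms0 B by simp
  next
    case (Suc i)
    have "lsm (Ms (Suc i))" unfolding MsS using ssum_lsm Suc M by blast
    moreover have "B \<subseteq> Ms (Suc i)" unfolding MsS using Suc ssum_left[OF lsm_0[OF M(1)], of "Ms i" i] by blast
    ultimately show ?case by blast
  qed
  show ?thesis
  proof (induction r)
    case 0
    show ?case
    proof (intro allI impI)
      fix X1 X2 assume H: "npair n X1 X2 \<and> B \<subseteq> X1 \<and> X2 \<subseteq> Ms 0"
      hence "X1 \<subseteq> X2" "X1 \<noteq> X2" unfolding npair_def simple_pair_def by auto
      moreover have "X2 \<subseteq> X1" using H Ms0 by blast
      ultimately show "\<exists>i<0. \<exists>Y1 Y2. npair n Y1 Y2 \<and> B \<subseteq> Y1 \<and> Y2 \<subseteq> M i" by blast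
    qed
  next
    case (Suc r)
    show ?case
    proof (intro allI impI)
      fix X1 X2 assume H: "npair n X1 X2 \<and> B \<subseteq> X1 \<and> X2 \<subseteq> Ms (Suc r)"
      have np: "npair n X1 X2" and BX: "B \<subseteq> X1" and cov: "X2 \<subseteq> ssum (Ms r) (M r)" using H MsS by auto
      have "(\<exists>Y1 Y2. npair n Y1 Y2 \<and> B \<subseteq> Y1 \<and> Y2 \<subseteq> Ms r) \<or> (\<exists>Y1 Y2. npair n Y1 Y2 \<and> B \<subseteq> Y1 \<and> Y2 \<subseteq> M r)"
        using npair_sum[OF np nG _ M(1) BX _ M(2) cov] MsL by blast
      thus "\<exists>i<Suc r. \<exists>Y1 Y2. npair n Y1 Y2 \<and> B \<subseteq> Y1 \<and> Y2 \<subseteq> M i"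
      proof
        assume "\<exists>Y1 Y2. npair n Y1 Y2 \<and> B \<subseteq> Y1 \<and> Y2 \<subseteq> Ms r"
        then obtain Y1 Y2 where "npair n Y1 Y2 \<and> B \<subseteq> Y1 \<and> Y2 \<subseteq> Ms r" by blast
        hence "\<exists>i<r. \<exists>Y1 Y2. npair n Y1 Y2 \<and> B \<subseteq> Y1 \<and> Y2 \<subseteq> M i" using Suc.IH by blast
        thus ?thesis using less_SucI by blast
      next
        assume "\<exists>Y1 Y2. npair n Y1 Y2 \<and> B \<subseteq> Y1 \<and> Y2 \<subseteq> M r"
        thus ?thesis by blast
      qed
    qed
  qed
qed

lemma npair_pull:
  assumes np: "npair n Y1 Y2" and nG: "n \<subseteq> G" and B: "lsm B" and BY: "B \<subseteq> Y1" and D: "lsm D"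
    and cov: "Y2 \<subseteq> ssum (imgm D \<mu>) B"
  shows "npair n {z \<in> D. z * \<mu> \<in> Y1} {z \<in> D. z * \<mu> \<in> Y2}"
proof -
  let ?P1 = "{z \<in> D. z * \<mu> \<in> Y1}" and ?P2 = "{z \<in> D. z * \<mu> \<in> Y2}"
  have sp: "simple_pair Y1 Y2" and nY: "\<forall>g\<in>n. \<forall>x\<in>Y2. g * x \<in> Y1" using np unfolding npair_def by auto
  have Y1: "lsm Y1" and Y2: "lsm Y2" and Y12: "Y1 \<subseteq> Y2" and Yne: "Y1 \<noteq> Y2" using sp unfolding simple_pair_def by auto
  have Plsm: "lsm {z \<in> D. z * \<mu> \<in> Y}" if Y: "lsm Y" for Y
    unfolding left_submod_def
  proof (intro conjI ballI)
    show "0 \<in> {z \<in> D. z * \<mu> \<in> Y}" using lsm_0[OF D] lsm_0[OF Y] by simp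
    fix a b assume "a \<in> {z \<in> D. z * \<mu> \<in> Y}" "b \<in> {z \<in> D. z * \<mu> \<in> Y}"
    thus "a + b \<in> {z \<in> D. z * \<mu> \<in> Y}" using lsm_add[OF D] lsm_add[OF Y] by (simp add: distrib_right)
  next
    fix g a assume g: "g \<in> G" and "a \<in> {z \<in> D. z * \<mu> \<in> Y}"
    thus "g * a \<in> {z \<in> D. z * \<mu> \<in> Y}" using lsm_mul[OF D g] lsm_mul[OF Y g] by (simp add: mult.assoc)
  qed
  have L1: "lsm ?P1" and L2: "lsm ?P2" using Plsm Y1 Y2 by auto
  have S12: "?P1 \<subseteq> ?P2" using Y12 by blast
  have decomp: "\<exists>z b. z \<in> D \<and> b \<in> B \<and> y = z * \<mu> + b" if "y \<in> Y2" for y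
  proof -
    have "y \<in> ssum (imgm D \<mu>) B" using cov that by blast
    then obtain c b where cb: "c \<in> imgm D \<mu>" "b \<in> B" "y = c + b" by (rule ssum_E)
    then obtain z where "z \<in> D" "c = z * \<mu>" unfolding imgm_def by blast
    thus ?thesis using cb by blast
  qed
  have ne: "?P1 \<noteq> ?P2"
  proof
    assume eq: "?P1 = ?P2"
    obtain y where y: "y \<in> Y2" "y \<notin> Y1" using Y12 Yne by blast
    obtain z b where zb: "z \<in> D" "b \<in> B" "y = z * \<mu> + b" using decomp[OF y(1)] by blast
    have e: "z * \<mu> = y - b" using zb by simp
    have bY1: "b \<in> Y1" using zb(2) BY by blast
    have "y - b \<in> Y2" by (rule lsm_diff[OF Y2 y(1)]) (use bY1 Y12 in blast)
    hence "z \<in> ?P2" using e zb(1) by simp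
    hence "z \<in> ?P1" using eq by simp
    hence "z * \<mu> \<in> Y1" by simp
    hence "z * \<mu> + b \<in> Y1" by (rule lsm_add[OF Y1 _ bY1])
    thus False using y zb by simp
  qed
  have simp: "\<forall>W. lsm W \<and> ?P1 \<subseteq> W \<and> W \<subseteq> ?P2 \<longrightarrow> W = ?P1 \<or> W = ?P2"
  proof (intro allI impI)
    fix W assume W: "lsm W \<and> ?P1 \<subseteq> W \<and> W \<subseteq> ?P2"
    let ?W' = "ssum (imgm W \<mu>) B"
    have W'L: "lsm ?W'" using ssum_lsm imgm_lsm W B by blast
    have "Y1 \<subseteq> ?W'"
    proof
      fix y assume y: "y \<in> Y1"
      obtain z b where zb: "z \<in> D" "b \<in> B" "y = z * \<mu> + b" using decomp y Y12 by blast
      have e: "z * \<mu> = y - b" using zb by simp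
      have "y - b \<in> Y1" using lsm_diff[OF Y1 y] zb(2) BY by blast
      hence "z \<in> ?P1" using e zb(1) by simp
      hence "z * \<mu> \<in> imgm W \<mu>" using W unfolding imgm_def by blast
      thus "y \<in> ?W'" using ssum_I zb by blast
    qed
    moreover have "?W' \<subseteq> Y2"
    proof (rule ssum_sub[OF Y2])
      show "imgm W \<mu> \<subseteq> Y2" using W unfolding imgm_def by blast
      show "B \<subseteq> Y2" using BY Y12 by blast
    qed
    ultimately have "?W' = Y1 \<or> ?W' = Y2" using simple_pairD[OF sp W'L] by blast
    thus "W = ?P1 \<or> W = ?P2"
    proof
      assume a: "?W' = Y1"
      have "W \<subseteq> ?P1"
      proof
        fix w assume w: "w \<in> W"
        have "w * \<mu> + 0 \<in> ?W'" using ssum_I[of "w * \<mu>" "imgm W \<mu>" 0 B] w lsm_0[OF B] unfolding imgm_def by blast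
        thus "w \<in> ?P1" using a w W by auto
      qed
      thus ?thesis using W by blast
    next
      assume a: "?W' = Y2"
      have "?P2 \<subseteq> W"
      proof
        fix z assume z: "z \<in> ?P2"
        hence "z * \<mu> \<in> ?W'" using a by blast
        then obtain c b where cb: "c \<in> imgm W \<mu>" "b \<in> B" "z * \<mu> = c + b" by (rule ssum_E)
        then obtain w where w: "w \<in> W" "c = w * \<mu>" unfolding imgm_def by blast
        have "(z - w) * \<mu> = b" using cb w by (simp add: algebra_simps)
        moreover have "z - w \<in> D" using lsm_diff[OF D] z w W by blast
        ultimately have "z - w \<in> ?P1" using cb BY by blast
        hence "z - w \<in> W" using W by blast
        hence "(z - w) + w \<in> W" using lsm_add[of W] w W by blast
        thus "z \<in> W" by simp
      qed
      thus ?thesis using W by blast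
    qed
  qed
  have ann: "\<forall>g\<in>n. \<forall>z\<in>?P2. g * z \<in> ?P1"
  proof (intro ballI)
    fix g z assume g: "g \<in> n" and z: "z \<in> ?P2"
    have "g * (z * \<mu>) \<in> Y1" using nY g z by blast
    moreover have "g * z \<in> D" using lsm_mul[OF D] g nG z by blast
    ultimately show "g * z \<in> ?P1" by (simp add: mult.assoc)
  qed
  show ?thesis unfolding npair_def simple_pair_def using L1 L2 S12 ne simp ann by blast
qed

lemma chain_step: "P (0::nat) \<Longrightarrow> \<not> P k \<Longrightarrow> \<exists>t<k. P t \<and> \<not> P (Suc t)"
proof (induction k)
  case 0 thus ?case by simp
next
  case (Suc k)
  show ?case
  proof (cases "P k")
    case True thus ?thesis using Suc.prems by blast
  next
    case False thus ?thesis using Suc.IH Suc.prems less_SucI by blast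
  qed
qed

end


context hc
begin

lemma support:
  assumes noeth: "noetherian G" and qcen: "quasicentral G"
    and m: "m \<in> cfs smult G" and k: "k \<ge> 1"
  shows "supp_quot smult G (Aideal G m k) \<subseteq> Xset smult G m"
proof
  fix n assume "n \<in> supp_quot smult G (Aideal G m k)"
  hence ncfs: "n \<in> cfs smult G" and nsub: "\<not> gpart G (Aideal G m k) n \<subseteq> Aideal G m k"
    unfolding supp_quot_def by auto
  define L where "L = setmul UNIV (ipow m k)"
  have LA: "Aideal G m k = L" unfolding L_def Aideal_def ..
  obtain x where x: "x \<in> gpart G L n" "x \<notin> L" using nsub unfolding LA by blast
  have tm: "tsi m" using max_tsi[OF cfs_max[OF m]] .
  have tn: "tsi n" using max_tsi[OF cfs_max[OF ncfs]] .
  have nG: "n \<subseteq> G" using tsi_sub[OF tn] .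
  have mG: "m \<subseteq> G" using tsi_sub[OF tm] .
  have L: "lsm L" unfolding L_def by (rule lsm_sU)
  let ?Nx = "ssum (imgm G x) L"
  have Nx: "lsm ?Nx" using ssum_lsm[OF imgm_lsm[OF lsm_G] L] .
  have LNx: "L \<subseteq> ?Nx" using ssum_right[OF lsm_0[OF imgm_lsm[OF lsm_G]]] .
  have "1 * x \<in> imgm G x" unfolding imgm_def using G1 by blast
  hence "1 * x + 0 \<in> ?Nx" using ssum_I lsm_0[OF L] by blast
  hence xNx: "x \<in> ?Nx" by simp
  let ?N0 = "ssum (dbl G x G) L"
  have fd0: "fdim ?N0 L" unfolding L_def using fdim_dbl[OF noeth qcen tm cfs_fc[OF m]] .
  have "imgm G x \<subseteq> dbl G x G"
  proof
    fix v assume "v \<in> imgm G x"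
    then obtain g where g: "g \<in> G" "v = g * x" unfolding imgm_def by blast
    have "g * x \<in> setmul G {x}" using setmul_prod g(1) by blast
    hence "(g * x) * 1 \<in> dbl G x G" unfolding dbl_def using setmul_prod G1 by blast
    thus "v \<in> dbl G x G" using g by simp
  qed
  hence NxN0: "?Nx \<subseteq> ?N0" unfolding ssum_def by blast
  have fdNx: "fdim ?Nx L" using fdim_sub[OF lsm_ksub[OF Nx] lsm_ksub[OF L] fd0 LNx NxN0] .
  have nNL: "\<not> ?Nx \<subseteq> L" using xNx x(2) by blast
  obtain U where sp: "simple_pair L U" and UNx: "U \<subseteq> ?Nx"
    using exists_simple_above[OF L Nx LNx nNL fdNx] by blast
  have U: "lsm U" and LU: "L \<subseteq> U" and LnU: "L \<noteq> U" using sp unfolding simple_pair_def by auto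
  define P where "P = {g \<in> G. \<forall>u\<in>U. g * u \<in> L}"
  have fdU: "fdim U L" using fdim_sub[OF lsm_ksub[OF U] lsm_ksub[OF L] fdNx LU UNx] .
  have Pc: "P \<in> cfs smult G" unfolding P_def using ann_cfs[OF sp fdU] .
  have tP: "tsi P" using max_tsi[OF cfs_max[OF Pc]] .
  obtain j where j: "\<forall>g\<in>ipow n j. g * x \<in> L" using x(1) unfolding gpart_def by blast
  have nP: "ipow n j \<subseteq> P"
  proof
    fix g assume g: "g \<in> ipow n j"
    have gG: "g \<in> G" using g tsi_sub[OF ipow_tsi[OF tn]] by blast
    have "\<forall>u\<in>U. g * u \<in> L"
    proof
      fix u assume "u \<in> U"
      hence "u \<in> ?Nx" using UNx by blast
      then obtain c l where cl: "c \<in> imgm G x" "l \<in> L" "u = c + l" by (rule ssum_E)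
      then obtain h where h: "h \<in> G" "c = h * x" unfolding imgm_def by blast
      have "g * h \<in> ipow n j" using tsi_mr[OF ipow_tsi[OF tn] h(1) g] .
      hence "(g * h) * x \<in> L" using j by blast
      moreover have "g * l \<in> L" using lsm_mul[OF L gG cl(2)] .
      ultimately have "(g * h) * x + g * l \<in> L" using lsm_add[OF L] by blast
      thus "g * u \<in> L" using cl h by (simp add: distrib_left mult.assoc)
    qed
    thus "g \<in> P" unfolding P_def using gG by blast
  qed
  have Pn: "P = n"
  proof (rule ccontr)
    assume ne: "P \<noteq> n"
    obtain e where e: "e \<in> ipow n j" "1 - e \<in> ipow P (Suc 0)"
      using comax[OF cfs_max[OF ncfs] cfs_max[OF Pc]] ne by metis
    have "1 - e \<in> P" using e(2) ipow_1[OF tP] by simp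
    moreover have "e \<in> P" using e(1) nP by blast
    ultimately have "e + (1 - e) \<in> P" using tsi_add[OF tP] by blast
    hence one: "1 \<in> P" by simp
    have "G \<subseteq> P"
    proof
      fix g assume "g \<in> G" hence "g * 1 \<in> P" using tsi_ml[OF tP _ one] by blast
      thus "g \<in> P" by simp
    qed
    hence "P = G" using tsi_sub[OF tP] by blast
    thus False using cfs_max[OF Pc] unfolding maximal_ideal_def by blast
  qed
  have nU: "\<forall>g\<in>n. \<forall>u\<in>U. g * u \<in> L" using Pn unfolding P_def by blast
  define A where "A t = setmul UNIV (ipow m t)" for t
  have AL: "lsm (A t)" for t unfolding A_def by (rule lsm_sU)
  have A0: "A 0 = UNIV"
  proof -
    have "a \<in> A 0" for a
    proof -
      have "a * 1 \<in> setmul UNIV G" using setmul_prod G1 by blast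
      thus ?thesis unfolding A_def by simp
    qed
    thus ?thesis by blast
  qed
  have LA': "L \<subseteq> A t" if "t \<le> k" for t
    unfolding L_def A_def by (rule setmul_mono) (use ipow_dec[OF tm that] in auto)
  define Y where "Y t = U \<inter> A t" for t
  have Yc: "Y t = L \<or> Y t = U" if "t \<le> k" for t
  proof -
    have "lsm (Y t)" unfolding Y_def using lsm_Int[OF U AL] .
    moreover have "L \<subseteq> Y t" unfolding Y_def using LU LA'[OF that] by blast
    moreover have "Y t \<subseteq> U" unfolding Y_def by blast
    ultimately show ?thesis using simple_pairD[OF sp] by blast
  qed
  have Y0: "Y 0 = U" unfolding Y_def A0 by simp
  have Yk: "Y k \<noteq> U"
  proof -
    have "Y k = U \<inter> L" unfolding Y_def A_def L_def by simp
    also have "\<dots> = L" using LU by blast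
    finally show ?thesis using LnU by simp
  qed
  obtain t where t: "t < k" "Y t = U" "Y (Suc t) \<noteq> U"
    using chain_step[of "\<lambda>t. Y t = U", OF Y0 Yk] by blast
  have UAt: "U \<subseteq> A t" using t(2) unfolding Y_def by blast
  have YS: "U \<inter> A (Suc t) = L" using Yc[of "Suc t"] t unfolding Y_def by auto
  let ?B = "A (Suc t)"
  have B: "lsm ?B" by (rule AL)
  have LB: "L \<subseteq> ?B" using LA'[of "Suc t"] t(1) by simp
  have np0: "npair n L U" unfolding npair_def using sp nU by blast
  have "npair n (ssum L ?B) (ssum U ?B)" using npair_T1[OF np0 nG B] YS by blast
  moreover have "ssum L ?B = ?B"
  proof
    show "ssum L ?B \<subseteq> ?B" using ssum_sub[OF B LB] by blast
    show "?B \<subseteq> ssum L ?B" using ssum_right[OF lsm_0[OF L]] .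
  qed
  ultimately have np1: "npair n ?B (ssum U ?B)" by simp
  obtain u where u: "u \<in> U" "u \<notin> L" using LU LnU by blast
  have "u \<in> A t" using UAt u by blast
  then obtain r :: nat and a \<mu> where ua: "u = (\<Sum>i<r. a i * \<mu> i)" "\<forall>i<r. a i \<in> UNIV \<and> \<mu> i \<in> ipow m t"
    unfolding A_def using setmul_E by blast
  define M where "M i = ssum (imgm (dbl G (a i) G) (\<mu> i)) ?B" for i
  have Mlsm: "lsm (M i)" for i unfolding M_def using ssum_lsm[OF imgm_lsm[OF lsm_dbl] B] .
  have BM: "?B \<subseteq> M i" for i unfolding M_def using ssum_right[OF lsm_0[OF imgm_lsm[OF lsm_dbl]]] .
  define Ms where "Ms = rec_nat ?B (\<lambda>i S. ssum S (M i))"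
  have Ms0: "Ms 0 = ?B" and MsS: "\<And>i. Ms (Suc i) = ssum (Ms i) (M i)" unfolding Ms_def by simp_all
  have MsL: "lsm (Ms i) \<and> ?B \<subseteq> Ms i" for i
  proof (induction i)
    case 0 thus ?case using Ms0 B by simp
  next
    case (Suc i)
    have "lsm (Ms (Suc i))" unfolding MsS using ssum_lsm Suc Mlsm by blast
    moreover have "?B \<subseteq> Ms (Suc i)" unfolding MsS using Suc ssum_left[OF lsm_0[OF Mlsm], of "Ms i" i] by blast
    ultimately show ?case by blast
  qed
  have gu: "g * u \<in> Ms r" if g: "g \<in> G" for g
  proof -
    have "\<forall>r'\<le>r. (\<Sum>i<r'. (g * a i) * \<mu> i) \<in> Ms r'"
    proof (intro allI impI)
      fix r' assume "r' \<le> r"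
      thus "(\<Sum>i<r'. (g * a i) * \<mu> i) \<in> Ms r'"
      proof (induction r')
        case 0 thus ?case using lsm_0 MsL by simp
      next
        case (Suc r')
        have IH: "(\<Sum>i<r'. (g * a i) * \<mu> i) \<in> Ms r'" using Suc by simp
        have "g * a r' \<in> setmul G {a r'}" using setmul_prod g by blast
        hence "(g * a r') * 1 \<in> dbl G (a r') G" unfolding dbl_def using setmul_prod G1 by blast
        hence "(g * a r') * \<mu> r' \<in> imgm (dbl G (a r') G) (\<mu> r')" unfolding imgm_def by auto
        hence "(g * a r') * \<mu> r' + 0 \<in> M r'" unfolding M_def using ssum_I lsm_0[OF B] by blast
        hence "(\<Sum>i<r'. (g * a i) * \<mu> i) + (g * a r') * \<mu> r' \<in> Ms (Suc r')"
          unfolding MsS using ssum_I IH by simp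
        thus ?case by simp
      qed
    qed
    hence "(\<Sum>i<r. (g * a i) * \<mu> i) \<in> Ms r" by blast
    moreover have "g * u = (\<Sum>i<r. (g * a i) * \<mu> i)" unfolding ua(1) by (simp add: sum_distrib_left mult.assoc)
    ultimately show ?thesis by simp
  qed
  have UMs: "U \<subseteq> Ms r"
  proof -
    have W: "lsm (ssum (imgm G u) L)" using ssum_lsm[OF imgm_lsm[OF lsm_G] L] .
    have LW: "L \<subseteq> ssum (imgm G u) L" using ssum_right[OF lsm_0[OF imgm_lsm[OF lsm_G]]] .
    have "1 * u \<in> imgm G u" unfolding imgm_def using G1 by blast
    hence "1 * u + 0 \<in> ssum (imgm G u) L" using ssum_I lsm_0[OF L] by blast
    hence uW: "u \<in> ssum (imgm G u) L" by simp
    have WU: "ssum (imgm G u) L \<subseteq> U"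
    proof (rule ssum_sub[OF U _ LU])
      show "imgm G u \<subseteq> U" unfolding imgm_def using lsm_mul[OF U _ u(1)] by blast
    qed
    have "ssum (imgm G u) L = U" using simple_pairD[OF sp W LW WU] uW u(2) by blast
    moreover have "ssum (imgm G u) L \<subseteq> Ms r"
    proof (rule ssum_sub)
      show "lsm (Ms r)" using MsL by blast
      show "imgm G u \<subseteq> Ms r" unfolding imgm_def using gu by blast
      show "L \<subseteq> Ms r" using LB MsL by blast
    qed
    ultimately show ?thesis by simp
  qed
  have cov: "ssum U ?B \<subseteq> Ms r" using ssum_sub[of "Ms r" U ?B] MsL UMs by blast
  have pre: "npair n ?B (ssum U ?B) \<and> ?B \<subseteq> ?B \<and> ssum U ?B \<subseteq> Ms r" using np1 cov by blast
  have "\<exists>i<r. \<exists>Y1 Y2. npair n Y1 Y2 \<and> ?B \<subseteq> Y1 \<and> Y2 \<subseteq> M i"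
    by (rule mp[OF spec[OF spec[OF npair_iter[OF nG B Mlsm BM Ms0 MsS, of r], of ?B], of "ssum U ?B"] pre])
  then obtain i Y1 Y2 where iY: "i < r" "npair n Y1 Y2" "?B \<subseteq> Y1" "Y2 \<subseteq> M i"
    by blast
  let ?D = "dbl G (a i) G"
  have cov2: "Y2 \<subseteq> ssum (imgm ?D (\<mu> i)) ?B" using iY(4) unfolding M_def .
  have np2: "npair n {z \<in> ?D. z * \<mu> i \<in> Y1} {z \<in> ?D. z * \<mu> i \<in> Y2}"
    by (rule npair_pull[OF iY(2) nG B iY(3) lsm_dbl cov2])
  have M0: "dbl G (a i) m \<subseteq> {z \<in> ?D. z * \<mu> i \<in> Y1}"
  proof
    fix z assume z: "z \<in> dbl G (a i) m"
    have "z \<in> ?D" using z setmul_mono[OF subset_refl mG] unfolding dbl_def by blast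
    moreover have "z * \<mu> i \<in> ?B"
    proof (rule setmul_apply[OF B])
      show "z \<in> setmul (setmul G {a i}) m" using z unfolding dbl_def .
      fix c e assume c: "c \<in> setmul G {a i}" and e: "e \<in> m"
      have "e * \<mu> i \<in> setmul m (ipow m t)" using setmul_prod[OF e] ua(2) iY(1) by blast
      hence "e * \<mu> i \<in> ipow m (Suc t)" by simp
      thus "c * (e * \<mu> i) \<in> ?B" unfolding A_def using setmul_prod by blast
    qed
    ultimately show "z \<in> {z \<in> ?D. z * \<mu> i \<in> Y1}" using iY(3) by blast
  qed
  let ?P1 = "{z \<in> ?D. z * \<mu> i \<in> Y1}" and ?P2 = "{z \<in> ?D. z * \<mu> i \<in> Y2}"
  have sp2: "simple_pair ?P1 ?P2" and ann2: "\<forall>g\<in>n. \<forall>x\<in>?P2. g * x \<in> ?P1"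
    using np2 unfolding npair_def by auto
  have P: "lsm ?P1" "lsm ?P2" "?P1 \<subseteq> ?P2" "?P1 \<noteq> ?P2"
    "\<forall>W. lsm W \<and> ?P1 \<subseteq> W \<and> W \<subseteq> ?P2 \<longrightarrow> W = ?P1 \<or> W = ?P2"
    using sp2 unfolding simple_pair_def by auto
  have P2D: "?P2 \<subseteq> ?D" by blast
  have "left_submod G ?P2 \<and> left_submod G ?P1 \<and> dbl G (a i) m \<subseteq> ?P1 \<and> ?P1 \<subseteq> ?P2 \<and> ?P2 \<subseteq> ?D \<and> ?P1 \<noteq> ?P2 \<and>
     (\<forall>L. left_submod G L \<and> ?P1 \<subseteq> L \<and> L \<subseteq> ?P2 \<longrightarrow> L = ?P1 \<or> L = ?P2) \<and>
     (\<forall>g\<in>n. \<forall>x\<in>?P2. g * x \<in> ?P1)"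
    using P M0 P2D ann2 by (intro conjI) auto
  hence "is_factor G n ?D (dbl G (a i) m)"
    unfolding is_factor_def by (intro exI[of _ ?P2] exI[of _ ?P1])
  hence "n \<in> {n \<in> cfs smult G. is_factor G n (dbl G (a i) G) (dbl G (a i) m)}" using ncfs by blast
  thus "n \<in> Xset smult G m" unfolding Xset_def by blast
qed

end

theorem mainTheorem11:
  fixes smult :: "'k::field \<Rightarrow> 'a::ring_1 \<Rightarrow> 'a" and G :: "'a set"
  assumes "is_algebra smult"
    and "subalgebra smult G"
    and "noetherian G"
    and "quasicommutative smult G"
    and "quasicentral G"
  shows "HC_block_subalgebra smult G \<and>
    (\<forall>m\<in>cfs smult G. \<forall>k\<ge>1. supp_quot smult G (Aideal G m k) \<subseteq> Xset smult G m)"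
proof -
  interpret hc smult G using assms(1,2) by unfold_locales
  show ?thesis using HC_block[OF assms(3,4,5)] support[OF assms(3,5)] by blast
qed


end
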